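(* Consider the energy-harvesting model described in the context, with parameters $p\in(0,1)$, $\gamma>0$, $B>0$, $w\in\mathbb{N}$. Let $\pi^*(w)$ be an optimal look-ahead policy of the stationary form described in the context (uniform allocation $b_\tau/d_\tau$ when an arrival is observed at distance $d_\tau\ge 1$ in the window, and $a_\tau=\mathcal{A}(b_\tau)$ otherwise), and let $(\xi_j^* )_{j\ge1}$ be its induced sequence. Then: (i) $\Gamma^*=\mathcal{T}_\infty^*$, where $\mathcal{T}_\infty^*=\sup \mathcal{T}_\infty(x_1,x_2,\dots)$ over all admissible sequences $(x_j)_{j\ge1}$; (ii) $(\xi_j^* )_{j\ge1}$ is the unique maximizer of $\mathcal{T}_\infty$ over admissible sequences; (iii) $(\xi_j^* )_{j\ge1}$ is the unique sequence satisfying, for all $j\in\mathbb{N}$, $$\frac{1-p}{1+\gamma \xi_{j+1}^*}=\frac{1}{1+\gamma \xi_j^*}-\frac{p}{1+\frac{\gamma}{w}\left(B-\sum_{i=1}^{j}\xi_i^*\right)},\qquad\text{and}\qquad \sum_{j=1}^{\infty}\xi_j^*=B;$$ (iv) $(\xi_j^* )_{j\ge1}$ is a strictly decreasing sequence of positive numbers satisfying $\xi_j^*<\frac{1}{w}\left(B-\sum_{i=1}^{j}\xi_i^*\right)$ for every $j\in\mathbb{N}$.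
   Context: Model: a transmitter sends over an AWGN channel with constant gain $\gamma>0$ in discrete time slots $\tau\in\mathbb{N}$; the reward of sending energy $a$ in a slot is $\frac12\log_2(1+\gamma a)$. The transmitter has a battery of capacity $B>0$. Energy arrivals $E_1,E_2,\dots$ are i.i.d. with $\Pr(E_\tau=B)=p$, $\Pr(E_\tau=0)=1-p$, where $0<p<1$. The battery level satisfies $B_1=B$ (the optimal value does not depend on the initial level) and $B_\tau=\min\{B_{\tau-1}-A_{\tau-1}+E_\tau,\,B\}$, where the action $A_\tau$ (energy spent at time $\tau$) must satisfy $0\le A_\tau\le B_\tau$. The transmitter has look-ahead window $w\in\mathbb{N}$: at time $\tau$ it knows $E_1,\dots,E_{\tau+w}$ (and $B_1$), and a (look-ahead) policy $\pi(w)$ is a sequence of (possibly randomized) action functions $A_\tau=\mathcal{A}_\tau((E_t)_{t=1}^{\tau+w},B_1)$. Its $T$-horizon average throughput is $\Gamma_T^{\pi(w)}=\frac1T\mathbb{E}\sum_{\tau=1}^T\frac12\log_2(1+\gamma A_\tau)$, and $\Gamma^*=\sup_{\pi(w)}\liminf_{T\to\infty}\Gamma_T^{\pi(w)}$. An optimal policy exists that is deterministic, Markovian and stationary; for the Bernoulli arrivals it can be taken of the following form: let $d_\tau=\min\{t\in\{1,\dots,w\}:E_{\tau+t}=B\}$ if this set is nonempty and $d_\tau=0$ otherwise; then $a_\tau=b_\tau/d_\tau$ if $d_\tau\neq0$, and $a_\tau=\mathcal{A}(b_\tau)$ if $d_\tau=0$, for some fixed function $\mathcal{A}$ with $0\le\mathcal{A}(b)\le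 b$. The sequence induced by such a policy is $\xi_j^*=\mathcal{A}(b_j)$, where $b_1=B$ and $b_{j+1}=b_j-\xi_j^*$ (the energies spent after a full charge while no arrival is seen in the window). A nonnegative sequence $(x_j)_{j\ge1}$ is admissible if $\sum_j x_j\le B$. For an admissible sequence, $$\mathcal{T}_\infty(x_1,x_2,\dots)=\sum_{k=1}^{w}p^2(1-p)^{k-1}\frac{k}{2}\log_2\!\Big(1+\gamma\frac{B}{k}\Big)+\sum_{j=1}^{\infty}p(1-p)^{j+w-1}\frac12\log_2(1+\gamma x_j)+\sum_{k=1}^{\infty}p^2(1-p)^{k+w-1}\frac{w}{2}\log_2\!\Big(1+\gamma\frac{B-\sum_{j=1}^{k}x_j}{w}\Big).$$ *)

theory Defs
  imports "HOL-Analysis.Analysis"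
begin

text \<open>Times are 1-indexed as in the paper: an arrival sequence is
  e :: nat => bool with e t = (E_t = B) for t >= 1 (e 0 is ignored).
  A (possibly randomized) look-ahead policy is pol :: nat => (nat => bool) => real => real,
  pol tau e u = A_tau, where u in [0,1] is a uniformly distributed randomization seed
  independent of the arrivals.\<close>

text \<open>Battery level under a policy: batt B pol e u n = B_(n+1).\<close>
fun batt :: "real \<Rightarrow> (nat \<Rightarrow> (nat \<Rightarrow> bool) \<Rightarrow> real \<Rightarrow> real) \<Rightarrow> (nat \<Rightarrow> bool) \<Rightarrow> real \<Rightarrow> nat \<Rightarrow> real" where
  "batt B pol e u 0 = B"
| "batt B pol e u (Suc n) =
     min (batt B pol e u n - pol (Suc n) e u + (if e (n + 2) then B else 0)) B"

definition feasible_policy :: "real \<Rightarrow> nat \<Rightarrow> (nat \<Rightarrow> (nat \<Rightarrow> bool) \<Rightarrow> real \<Rightarrow> real) \<Rightarrow> bool" where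
  "feasible_policy B w pol \<longleftrightarrow>
     (\<forall>\<tau>\<ge>1. \<forall>e e' u. (\<forall>t\<in>{1..\<tau>+w}. e t = e' t) \<longrightarrow> pol \<tau> e u = pol \<tau> e' u) \<and>
     (\<forall>\<tau> e. pol \<tau> e \<in> borel_measurable borel) \<and>
     (\<forall>\<tau>\<ge>1. \<forall>e. \<forall>u\<in>{0..1}. 0 \<le> pol \<tau> e u \<and> pol \<tau> e u \<le> batt B pol e u (\<tau> - 1))"

definition hist_prob :: "real \<Rightarrow> bool list \<Rightarrow> real" where
  "hist_prob p xs = prod_list (map (\<lambda>b. if b then p else 1 - p) xs)"

definition seq_of :: "bool list \<Rightarrow> nat \<Rightarrow> bool" where
  "seq_of xs t = (1 \<le> t \<and> t \<le> length xs \<and> xs ! (t - 1))"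

definition avg_throughput :: "real \<Rightarrow> real \<Rightarrow> nat \<Rightarrow> (nat \<Rightarrow> (nat \<Rightarrow> bool) \<Rightarrow> real \<Rightarrow> real) \<Rightarrow> nat \<Rightarrow> real" where
  "avg_throughput p \<gamma> w pol T =
     (1 / real T) * (\<Sum>xs\<in>{xs :: bool list. length xs = T + w}.
        hist_prob p xs * (LBINT u:{0..1}. (\<Sum>\<tau>=1..T. log 2 (1 + \<gamma> * pol \<tau> (seq_of xs) u) / 2)))"

definition opt_value :: "real \<Rightarrow> real \<Rightarrow> real \<Rightarrow> nat \<Rightarrow> ereal" where
  "opt_value p \<gamma> B w =
     (SUP pol\<in>{pol. feasible_policy B w pol}. liminf (\<lambda>T. ereal (avg_throughput p \<gamma> w pol T)))"

text \<open>Sequences are 0-indexed: x j stands for the paper's x_(j+1).\<close>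
definition admissible :: "real \<Rightarrow> (nat \<Rightarrow> real) \<Rightarrow> bool" where
  "admissible B x \<longleftrightarrow> (\<forall>j. 0 \<le> x j) \<and> summable x \<and> suminf x \<le> B"

definition T_inf :: "real \<Rightarrow> real \<Rightarrow> real \<Rightarrow> nat \<Rightarrow> (nat \<Rightarrow> real) \<Rightarrow> real" where
  "T_inf p \<gamma> B w x =
     (\<Sum>k=1..w. p^2 * (1 - p)^(k - 1) * (real k / 2) * log 2 (1 + \<gamma> * B / real k))
   + (\<Sum>j. p * (1 - p)^(j + w) * (log 2 (1 + \<gamma> * x j) / 2))
   + (\<Sum>k. p^2 * (1 - p)^(k + w) * (real w / 2) * log 2 (1 + \<gamma> * (B - (\<Sum>i\<le>k. x i)) / real w))"

definition win_dist :: "nat \<Rightarrow> (nat \<Rightarrow> bool) \<Rightarrow> nat \<Rightarrow> nat" where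
  "win_dist w e \<tau> = (if \<exists>t\<in>{1..w}. e (\<tau> + t) then (LEAST t. t \<in> {1..w} \<and> e (\<tau> + t)) else 0)"

definition stat_rule :: "nat \<Rightarrow> (real \<Rightarrow> real) \<Rightarrow> (nat \<Rightarrow> bool) \<Rightarrow> nat \<Rightarrow> real \<Rightarrow> real" where
  "stat_rule w Afun e \<tau> b = (if win_dist w e \<tau> \<noteq> 0 then b / real (win_dist w e \<tau>) else Afun b)"

text \<open>Battery under the stationary policy: sbatt ... n = B_(n+1).\<close>
fun sbatt :: "real \<Rightarrow> nat \<Rightarrow> (real \<Rightarrow> real) \<Rightarrow> (nat \<Rightarrow> bool) \<Rightarrow> nat \<Rightarrow> real" where
  "sbatt B w Afun e 0 = B"
| "sbatt B w Afun e (Suc n) =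
     min (sbatt B w Afun e n - stat_rule w Afun e (Suc n) (sbatt B w Afun e n)
          + (if e (n + 2) then B else 0)) B"

definition stat_policy :: "real \<Rightarrow> nat \<Rightarrow> (real \<Rightarrow> real) \<Rightarrow> nat \<Rightarrow> (nat \<Rightarrow> bool) \<Rightarrow> real \<Rightarrow> real" where
  "stat_policy B w Afun \<tau> e u = stat_rule w Afun e \<tau> (sbatt B w Afun e (\<tau> - 1))"

fun ind_batt :: "real \<Rightarrow> (real \<Rightarrow> real) \<Rightarrow> nat \<Rightarrow> real" where
  "ind_batt B Afun 0 = B"
| "ind_batt B Afun (Suc j) = ind_batt B Afun j - Afun (ind_batt B Afun j)"

definition induced_seq :: "real \<Rightarrow> (real \<Rightarrow> real) \<Rightarrow> nat \<Rightarrow> real" where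
  "induced_seq B Afun j = Afun (ind_batt B Afun j)"

end

theory Submission
  imports Defs
begin

fun age0 :: "(nat \<Rightarrow> bool) \<Rightarrow> nat \<Rightarrow> nat" where
  "age0 e 0 = 0"
| "age0 e (Suc n) = (if e (n + 2) then 0 else Suc (age0 e n))"

locale afun_ok =
  fixes B :: real and Afun :: "real \<Rightarrow> real"
  assumes Bpos: "B > 0"
    and Aok: "\<forall>b. 0 \<le> b \<and> b \<le> B \<longrightarrow> 0 \<le> Afun b \<and> Afun b \<le> b"
begin

lemma ind_batt_bounds: "0 \<le> ind_batt B Afun j \<and> ind_batt B Afun j \<le> B"
proof (induction j)
  case 0 then show ?case using Bpos by simp
next
  case (Suc j) then show ?case using Aok by force
qed

lemma xi_bounds: "0 \<le> induced_seq B Afun j \<and> induced_seq B Afun j \<le> ind_batt B Afun j"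
  using Aok ind_batt_bounds unfolding induced_seq_def by blast

end

lemma wd_pos:
  assumes "win_dist w e \<tau> \<noteq> 0"
  shows "1 \<le> win_dist w e \<tau> \<and> win_dist w e \<tau> \<le> w \<and> e (\<tau> + win_dist w e \<tau>)
         \<and> (\<forall>t. 1 \<le> t \<and> t < win_dist w e \<tau> \<longrightarrow> \<not> e (\<tau> + t))"
proof -
  have ex: "\<exists>t\<in>{1..w}. e (\<tau> + t)" using assms unfolding win_dist_def by (auto split: if_splits)
  then obtain t0 where t0: "t0 \<in> {1..w} \<and> e (\<tau> + t0)" by blast
  have d: "win_dist w e \<tau> = (LEAST t. t \<in> {1..w} \<and> e (\<tau> + t))" using ex unfolding win_dist_def by simp
  have 1: "win_dist w e \<tau> \<in> {1..w} \<and> e (\<tau> + win_dist w e \<tau>)"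
    unfolding d by (rule LeastI[of _ t0]) (use t0 in blast)
  have 2: "\<not> e (\<tau> + t)" if "1 \<le> t" "t < win_dist w e \<tau>" for t
  proof
    assume "e (\<tau> + t)"
    then have "t \<in> {1..w} \<and> e (\<tau> + t)" using that 1 by auto
    then have "win_dist w e \<tau> \<le> t" unfolding d by (rule Least_le)
    then show False using that by simp
  qed
  show ?thesis using 1 2 by auto
qed

lemma wd_zero: "win_dist w e \<tau> = 0 \<longleftrightarrow> (\<forall>t\<in>{1..w}. \<not> e (\<tau> + t))"
proof
  assume "win_dist w e \<tau> = 0"
  then show "\<forall>t\<in>{1..w}. \<not> e (\<tau> + t)"
  proof (cases "\<exists>t\<in>{1..w}. e (\<tau> + t)")
    case True
    then have "win_dist w e \<tau> \<noteq> 0"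
    proof -
      obtain t0 where t0: "t0 \<in> {1..w} \<and> e (\<tau> + t0)" using True by blast
      have "(LEAST t. t \<in> {1..w} \<and> e (\<tau> + t)) \<in> {1..w}"
        by (rule LeastI2[of _ t0]) (use t0 in auto)
      then show ?thesis using True unfolding win_dist_def by auto
    qed
    then show ?thesis using \<open>win_dist w e \<tau> = 0\<close> by simp
  qed auto
qed (auto simp: win_dist_def)

lemma wd_char:
  assumes "1 \<le> d" "d \<le> w" "e (\<tau> + d)" "\<forall>t. 1 \<le> t \<and> t < d \<longrightarrow> \<not> e (\<tau> + t)"
  shows "win_dist w e \<tau> = d"
proof -
  have ex: "\<exists>t\<in>{1..w}. e (\<tau> + t)" using assms by auto
  have "(LEAST t. t \<in> {1..w} \<and> e (\<tau> + t)) = d"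
  proof (rule Least_equality)
    show "d \<in> {1..w} \<and> e (\<tau> + d)" using assms by auto
    fix y assume "y \<in> {1..w} \<and> e (\<tau> + y)"
    then show "d \<le> y" using assms(4) by (meson atLeastAtMost_iff not_le_imp_less)
  qed
  then show ?thesis using ex unfolding win_dist_def by simp
qed

lemma wd_one: "1 \<le> w \<Longrightarrow> e (Suc \<tau>) \<Longrightarrow> win_dist w e \<tau> = 1"
  by (rule wd_char) auto

lemma wd_step:
  assumes "\<not> e (Suc \<tau>)" "win_dist w e \<tau> \<noteq> 0"
  shows "win_dist w e (Suc \<tau>) = win_dist w e \<tau> - 1 \<and> win_dist w e \<tau> \<ge> 2"
proof -
  let ?d = "win_dist w e \<tau>"
  have P: "1 \<le> ?d \<and> ?d \<le> w \<and> e (\<tau> + ?d) \<and> (\<forall>t. 1 \<le> t \<and> t < ?d \<longrightarrow> \<not> e (\<tau> + t))"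
    by (rule wd_pos[OF assms(2)])
  have "?d \<noteq> 1" using P assms(1) by (metis Suc_eq_plus1_left add.commute)
  then have d2: "?d \<ge> 2" using P by linarith
  have "win_dist w e (Suc \<tau>) = ?d - 1"
  proof (rule wd_char)
    show "1 \<le> ?d - 1" using d2 by simp
    show "?d - 1 \<le> w" using P by linarith
    have "Suc \<tau> + (?d - 1) = \<tau> + ?d" using d2 by simp
    then show "e (Suc \<tau> + (?d - 1))" using P by simp
    show "\<forall>t. 1 \<le> t \<and> t < ?d - 1 \<longrightarrow> \<not> e (Suc \<tau> + t)"
    proof (intro allI impI)
      fix t assume t: "1 \<le> t \<and> t < ?d - 1"
      have "Suc \<tau> + t = \<tau> + Suc t" by simp
      moreover have "1 \<le> Suc t \<and> Suc t < ?d" using t by linarith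
      ultimately show "\<not> e (Suc \<tau> + t)" using P by metis
    qed
  qed
  then show ?thesis using d2 by simp
qed

lemma wd_step0:
  assumes "1 \<le> w" "win_dist w e \<tau> = 0"
  shows "win_dist w e (Suc \<tau>) = (if e (Suc \<tau> + w) then w else 0)"
proof -
  have Z: "\<forall>t\<in>{1..w}. \<not> e (\<tau> + t)" using assms(2) by (simp add: wd_zero)
  show ?thesis
  proof (cases "e (Suc \<tau> + w)")
    case True
    have "win_dist w e (Suc \<tau>) = w"
    proof (rule wd_char)
      show "\<forall>t. 1 \<le> t \<and> t < w \<longrightarrow> \<not> e (Suc \<tau> + t)"
      proof (intro allI impI)
        fix t assume t: "1 \<le> t \<and> t < w"
        have "Suc \<tau> + t = \<tau> + Suc t" by simp
        moreover have "Suc t \<in> {1..w}" using t by simp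
        ultimately show "\<not> e (Suc \<tau> + t)" using Z by metis
      qed
    qed (use assms True in auto)
    then show ?thesis using True by simp
  next
    case False
    have "\<forall>t\<in>{1..w}. \<not> e (Suc \<tau> + t)"
    proof
      fix t assume t: "t \<in> {1..w}"
      show "\<not> e (Suc \<tau> + t)"
      proof (cases "t = w")
        case True then show ?thesis using False by simp
      next
        case False
        then have "Suc t \<in> {1..w}" using t by auto
        moreover have "Suc \<tau> + t = \<tau> + Suc t" by simp
        ultimately show ?thesis using Z by metis
      qed
    qed
    then show ?thesis using False wd_zero by (simp)
  qed
qed


locale sysw = afun_ok +
  fixes w :: nat
  assumes w1: "1 \<le> w"
begin

definition act :: "nat \<Rightarrow> nat \<Rightarrow> real" where
  "act i d = (if d \<noteq> 0 then ind_batt B Afun (i + d - w) / real (min (i + d) w) else induced_seq B Afun i)"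

definition sclosed :: "nat \<Rightarrow> nat \<Rightarrow> real" where
  "sclosed i d = (if d \<noteq> 0 then ind_batt B Afun (i + d - w) * real d / real (min (i + d) w) else ind_batt B Afun i)"

lemma sbatt_closed: "sbatt B w Afun e n = sclosed (age0 e n) (win_dist w e (Suc n))"
proof (induction n)
  case 0
  let ?d = "win_dist w e (Suc 0)"
  show ?case
  proof (cases "?d = 0")
    case True then show ?thesis by (simp add: sclosed_def)
  next
    case False
    then have "?d \<le> w" "?d \<ge> 1" using wd_pos by blast+
    then show ?thesis using False by (simp add: sclosed_def)
  qed
next
  case (Suc n)
  let ?i = "age0 e n" and ?d = "win_dist w e (Suc n)"
  have IH: "sbatt B w Afun e n = sclosed ?i ?d" by (rule Suc.IH)
  show ?case
  proof (cases "e (n + 2)")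
    case True
    have d1: "?d = 1" using wd_one[OF w1, of e "Suc n"] True by simp
    have lhs: "sbatt B w Afun e (Suc n) = B"
      using True d1 by (simp add: stat_rule_def)
    let ?d' = "win_dist w e (Suc (Suc n))"
    have "sclosed 0 ?d' = B"
    proof (cases "?d' = 0")
      case True then show ?thesis by (simp add: sclosed_def)
    next
      case False
      then have "?d' \<le> w" "?d' \<ge> 1" using wd_pos by blast+
      then show ?thesis using False by (simp add: sclosed_def)
    qed
    then show ?thesis using lhs True by simp
  next
    case False
    then have nS: "\<not> e (Suc (Suc n))" by (simp add: numeral_2_eq_2)
    have age: "age0 e (Suc n) = Suc ?i" using False by simp
    show ?thesis
    proof (cases "?d = 0")
      case True
      have sr: "stat_rule w Afun e (Suc n) (sbatt B w Afun e n) = induced_seq B Afun ?i"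
        using True IH by (simp add: stat_rule_def sclosed_def induced_seq_def)
      have nb: "ind_batt B Afun ?i - induced_seq B Afun ?i = ind_batt B Afun (Suc ?i)"
        by (simp add: induced_seq_def)
      have lhs: "sbatt B w Afun e (Suc n) = ind_batt B Afun (Suc ?i)"
        using False sr IH True nb ind_batt_bounds[of "Suc ?i"] by (simp add: sclosed_def)
      have d': "win_dist w e (Suc (Suc n)) = (if e (Suc (Suc n) + w) then w else 0)"
        using wd_step0[OF w1 True] .
      show ?thesis
      proof (cases "e (Suc (Suc n) + w)")
        case True
        then show ?thesis using lhs age d' w1 by (simp add: sclosed_def)
      next
        case False
        then show ?thesis using lhs age d' by (simp add: sclosed_def)
      qed
    next
      case dn: False
      have st: "win_dist w e (Suc (Suc n)) = ?d - 1" "?d \<ge> 2" using wd_step[OF nS dn] by auto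
      have dw: "?d \<le> w" using wd_pos[OF dn] by blast
      define X where "X = ind_batt B Afun (?i + ?d - w)"
      define m where "m = min (?i + ?d) w"
      have X: "0 \<le> X" "X \<le> B" using ind_batt_bounds X_def by auto
      have dm: "?d \<le> m" using dw m_def by simp
      have mpos: "real m > 0" using dm st by simp
      have sb: "sbatt B w Afun e n = X * real ?d / real m" using IH dn by (simp add: sclosed_def X_def m_def)
      have sr: "stat_rule w Afun e (Suc n) (sbatt B w Afun e n) = X / real m"
        using sb dn st by (simp add: stat_rule_def)
      have val: "X * real ?d / real m - X / real m = X * real (?d - 1) / real m"
      proof -
        have "real (?d - 1) = real ?d - 1" using st by simp
        then show ?thesis by (simp add: right_diff_distrib diff_divide_distrib)
      qed
      have le: "X * real (?d - 1) / real m \<le> B"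
      proof -
        have "real (?d - 1) / real m \<le> 1" using dm mpos by simp
        then have "X * (real (?d - 1) / real m) \<le> X * 1" using X by (intro mult_left_mono) auto
        then show ?thesis using X by simp
      qed
      have lhs: "sbatt B w Afun e (Suc n) = X * real (?d - 1) / real m"
        using False sr sb val le by simp
      have "Suc ?i + (?d - 1) = ?i + ?d" using st by simp
      then show ?thesis using lhs age st by (simp add: sclosed_def X_def m_def)
    qed
  qed
qed

lemma stat_policy_act: "stat_policy B w Afun (Suc n) e u = act (age0 e n) (win_dist w e (Suc n))"
proof -
  let ?i = "age0 e n" and ?d = "win_dist w e (Suc n)"
  show ?thesis
  proof (cases "?d = 0")
    case True then show ?thesis
      by (simp add: stat_policy_def stat_rule_def sbatt_closed sclosed_def act_def induced_seq_def)
  next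
    case False
    then have "?d \<ge> 1" using wd_pos by blast
    then show ?thesis using False
      by (simp add: stat_policy_def stat_rule_def sbatt_closed sclosed_def act_def)
  qed
qed

lemma act_bounds: "0 \<le> act i d \<and> act i d \<le> sclosed i d"
proof (cases "d = 0")
  case True then show ?thesis using xi_bounds by (simp add: act_def sclosed_def)
next
  case False
  define X where "X = ind_batt B Afun (i + d - w)"
  have X: "0 \<le> X" using ind_batt_bounds X_def by auto
  have "X / real (min (i + d) w) \<le> X * real d / real (min (i + d) w)"
    using X False by (simp add: divide_right_mono mult_le_cancel_left1)
  then show ?thesis using False X by (simp add: act_def sclosed_def X_def)
qed

lemma act_le_B: "0 \<le> act i d \<and> act i d \<le> B"
proof (cases "d = 0")
  case True then show ?thesis using xi_bounds ind_batt_bounds by (simp add: act_def) (meson order.trans)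
next
  case False
  define X where "X = ind_batt B Afun (i + d - w)"
  have X: "0 \<le> X" "X \<le> B" using ind_batt_bounds X_def by auto
  have "real (min (i + d) w) \<ge> 1" using False w1 by simp
  then have "X / real (min (i + d) w) \<le> X" using X by (simp add: divide_le_eq mult_le_cancel_left1)
  then show ?thesis using False X by (simp add: act_def X_def)
qed

lemma batt_eq: "batt B (stat_policy B w Afun) e u n = sbatt B w Afun e n"
  by (induction n) (simp_all add: stat_policy_def)

lemma age0_local: "(\<forall>t. 1 \<le> t \<and> t \<le> Suc n \<longrightarrow> e t = e' t) \<Longrightarrow> age0 e n = age0 e' n"
  by (induction n) auto

lemma wd_local: "(\<forall>t\<in>{1..w}. e (\<tau> + t) = e' (\<tau> + t)) \<Longrightarrow> win_dist w e \<tau> = win_dist w e' \<tau>"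
proof -
  assume H: "\<forall>t\<in>{1..w}. e (\<tau> + t) = e' (\<tau> + t)"
  have 1: "(\<exists>t\<in>{1..w}. e (\<tau> + t)) = (\<exists>t\<in>{1..w}. e' (\<tau> + t))" using H by auto
  have 2: "(\<lambda>t. t \<in> {1..w} \<and> e (\<tau> + t)) = (\<lambda>t. t \<in> {1..w} \<and> e' (\<tau> + t))" using H by auto
  show ?thesis unfolding win_dist_def 1 2 ..
qed

lemma feasible: "feasible_policy B w (stat_policy B w Afun)"
proof -
  have A: "stat_policy B w Afun \<tau> e u = stat_policy B w Afun \<tau> e' u"
    if t1: "1 \<le> \<tau>" and H: "\<forall>t\<in>{1..\<tau> + w}. e t = e' t" for \<tau> e e' u
  proof -
    obtain n where n: "\<tau> = Suc n" using t1 by (cases \<tau>) auto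
    have a: "age0 e n = age0 e' n" using H n by (intro age0_local) auto
    have d: "win_dist w e (Suc n) = win_dist w e' (Suc n)" using H n by (intro wd_local) auto
    show ?thesis using a d n by (simp add: stat_policy_act)
  qed
  have M: "stat_policy B w Afun \<tau> e \<in> borel_measurable borel" for \<tau> e
    unfolding stat_policy_def by simp
  have C: "0 \<le> stat_policy B w Afun \<tau> e u \<and> stat_policy B w Afun \<tau> e u \<le> batt B (stat_policy B w Afun) e u (\<tau> - 1)"
    if t1: "1 \<le> \<tau>" for \<tau> e u
  proof -
    obtain n where n: "\<tau> = Suc n" using t1 by (cases \<tau>) auto
    show ?thesis using act_bounds n by (simp add: stat_policy_act batt_eq sbatt_closed)
  qed
  show ?thesis unfolding feasible_policy_def using A M C by blast
qed

end

lemma fin_lists: "finite {xs :: bool list. length xs = n}"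
  using finite_lists_length_eq[of "UNIV :: bool set" n] by simp

lemma hp_Cons: "hist_prob p (b # xs) = (if b then p else 1 - p) * hist_prob p xs"
  by (simp add: hist_prob_def)

lemma hp_append: "hist_prob p (xs @ ys) = hist_prob p xs * hist_prob p ys"
  by (simp add: hist_prob_def)

lemma sum_lists_Suc:
  "(\<Sum>xs\<in>{xs :: bool list. length xs = Suc n}. F xs)
   = (\<Sum>xs\<in>{xs. length xs = n}. F (True # xs) + F (False # xs))"
proof -
  let ?S = "{xs :: bool list. length xs = n}"
  have eq: "{xs :: bool list. length xs = Suc n} = (Cons True) ` ?S \<union> (Cons False) ` ?S"
  proof (rule set_eqI)
    fix xs :: "bool list"
    show "xs \<in> {xs. length xs = Suc n} \<longleftrightarrow> xs \<in> (Cons True) ` ?S \<union> (Cons False) ` ?S"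
    proof
      assume "xs \<in> {xs. length xs = Suc n}"
      then obtain b ys where "xs = b # ys" "length ys = n" by (auto simp: length_Suc_conv)
      then show "xs \<in> (Cons True) ` ?S \<union> (Cons False) ` ?S" by (cases b) auto
    qed auto
  qed
  have d: "(Cons True) ` ?S \<inter> (Cons False) ` ?S = {}" by auto
  have "(\<Sum>xs\<in>{xs :: bool list. length xs = Suc n}. F xs)
      = (\<Sum>xs\<in>(Cons True) ` ?S. F xs) + (\<Sum>xs\<in>(Cons False) ` ?S. F xs)"
    unfolding eq by (rule sum.union_disjoint) (use fin_lists d in auto)
  also have "\<dots> = (\<Sum>xs\<in>?S. F (True # xs)) + (\<Sum>xs\<in>?S. F (False # xs))"
    by (subst sum.reindex, simp add: inj_on_def, subst sum.reindex, simp add: inj_on_def, simp)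
  finally show ?thesis by (simp add: sum.distrib)
qed

lemma sum_lists_append:
  "(\<Sum>xs\<in>{xs :: bool list. length xs = a + b}. F xs)
   = (\<Sum>ys\<in>{ys. length ys = a}. \<Sum>zs\<in>{zs. length zs = b}. F (ys @ zs))"
proof (induction a arbitrary: F)
  case 0
  have "{ys :: bool list. length ys = 0} = {[]}" by auto
  then show ?case by simp
next
  case (Suc a)
  have "(\<Sum>xs\<in>{xs :: bool list. length xs = Suc a + b}. F xs)
      = (\<Sum>xs\<in>{xs. length xs = a + b}. F (True # xs) + F (False # xs))"
    using sum_lists_Suc[where n="a + b" and F=F] by simp
  also have "\<dots> = (\<Sum>ys\<in>{ys. length ys = a}. \<Sum>zs\<in>{zs. length zs = b}. F (True # ys @ zs) + F (False # ys @ zs))"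
    using Suc.IH[where F="\<lambda>xs. F (True # xs) + F (False # xs)"] by simp
  also have "\<dots> = (\<Sum>ys\<in>{ys. length ys = Suc a}. \<Sum>zs\<in>{zs. length zs = b}. F (ys @ zs))"
    by (subst sum_lists_Suc) (simp add: sum.distrib)
  finally show ?case .
qed

lemma hp_sum1: "(\<Sum>xs\<in>{xs :: bool list. length xs = n}. hist_prob p xs) = 1"
proof (induction n)
  case 0
  have "{ys :: bool list. length ys = 0} = {[]}" by auto
  then show ?case by (simp add: hist_prob_def)
next
  case (Suc n)
  show ?case by (subst sum_lists_Suc) (simp add: hp_Cons sum.distrib Suc.IH flip: distrib_right sum_distrib_left)
qed

lemma sum_lists_snoc:
  "(\<Sum>xs\<in>{xs :: bool list. length xs = Suc n}. F xs)
   = (\<Sum>ys\<in>{ys. length ys = n}. F (ys @ [True]) + F (ys @ [False]))"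
proof -
  have "{zs :: bool list. length zs = 1} = {[True], [False]}"
    by (auto simp: length_Suc_conv)
  then show ?thesis using sum_lists_append[where a=n and b=1 and F=F] by simp
qed

lemma seq_of_append_left: "t \<le> length ys \<Longrightarrow> seq_of (ys @ zs) t = seq_of ys t"
  by (auto simp: seq_of_def nth_append)

lemma seq_of_append_right: "1 \<le> t \<Longrightarrow> seq_of (ys @ zs) (length ys + t) = seq_of zs t"
  by (cases t) (auto simp: seq_of_def nth_append)

lemma seq_of_Cons_Suc: "seq_of (b # zs) (Suc t) = (if t = 0 then b else seq_of zs t)"
  by (auto simp: seq_of_def)

lemma age0_local': "(\<forall>t. 1 \<le> t \<and> t \<le> Suc n \<longrightarrow> e t = e' t) \<Longrightarrow> age0 e n = age0 e' n"
  by (induction n) auto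

lemma wd_local2: "(\<forall>t\<in>{1..w}. e (\<tau> + t) = e' (\<tau>' + t)) \<Longrightarrow> win_dist w e \<tau> = win_dist w e' \<tau>'"
proof -
  assume H: "\<forall>t\<in>{1..w}. e (\<tau> + t) = e' (\<tau>' + t)"
  have 1: "(\<exists>t\<in>{1..w}. e (\<tau> + t)) = (\<exists>t\<in>{1..w}. e' (\<tau>' + t))" using H by auto
  have 2: "(\<lambda>t. t \<in> {1..w} \<and> e (\<tau> + t)) = (\<lambda>t. t \<in> {1..w} \<and> e' (\<tau>' + t))" using H by auto
  show ?thesis unfolding win_dist_def 1 2 ..
qed

lemma wd_cons: "win_dist (Suc w) e \<tau> = (if e (Suc \<tau>) then 1 else
   (if win_dist w e (Suc \<tau>) = 0 then 0 else Suc (win_dist w e (Suc \<tau>))))"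
proof (cases "e (Suc \<tau>)")
  case True then show ?thesis by (simp add: wd_one)
next
  case False
  show ?thesis
  proof (cases "win_dist w e (Suc \<tau>) = 0")
    case True
    then have Z: "\<forall>t\<in>{1..w}. \<not> e (Suc \<tau> + t)" by (simp add: wd_zero)
    have "\<forall>t\<in>{1..Suc w}. \<not> e (\<tau> + t)"
    proof
      fix t assume t: "t \<in> {1..Suc w}"
      show "\<not> e (\<tau> + t)"
      proof (cases "t = 1")
        case True then show ?thesis using False by simp
      next
        case f2: False
        then obtain s where s: "t = Suc s" "s \<in> {1..w}" using t by (cases t) auto
        then show ?thesis using Z by (metis add_Suc_right add_Suc_shift)
      qed
    qed
    then show ?thesis using True False by (simp add: wd_zero)
  next
    case nz: False
    let ?d = "win_dist w e (Suc \<tau>)"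
    have P: "1 \<le> ?d \<and> ?d \<le> w \<and> e (Suc \<tau> + ?d) \<and> (\<forall>t. 1 \<le> t \<and> t < ?d \<longrightarrow> \<not> e (Suc \<tau> + t))"
      using wd_pos[OF nz] .
    have "win_dist (Suc w) e \<tau> = Suc ?d"
    proof (rule wd_char)
      show "e (\<tau> + Suc ?d)" using P by simp
      show "\<forall>t. 1 \<le> t \<and> t < Suc ?d \<longrightarrow> \<not> e (\<tau> + t)"
      proof (intro allI impI)
        fix t assume t: "1 \<le> t \<and> t < Suc ?d"
        show "\<not> e (\<tau> + t)"
        proof (cases "t = 1")
          case True then show ?thesis using False by simp
        next
          case f2: False
          then obtain s where s: "t = Suc s" "1 \<le> s" "s < ?d" using t by (cases t) auto
          then show ?thesis using P by (metis add_Suc_right add_Suc_shift)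
        qed
      qed
    qed (use P in auto)
    then show ?thesis using False nz by simp
  qed
qed

lemma wd_zero_w: "win_dist 0 e \<tau> = 0"
  by (simp add: win_dist_def)

lemma sum_aux: fixes a b :: "'a \<Rightarrow> real" shows "(\<Sum>x\<in>S. a x * (c + d * b x)) = c * (\<Sum>x\<in>S. a x) + d * (\<Sum>x\<in>S. a x * b x)"
proof -
  have "(\<Sum>x\<in>S. a x * (c + d * b x)) = (\<Sum>x\<in>S. c * a x + d * (a x * b x))"
    by (intro sum.cong refl) (simp add: algebra_simps)
  also have "\<dots> = c * (\<Sum>x\<in>S. a x) + d * (\<Sum>x\<in>S. a x * b x)"
    by (simp add: sum.distrib sum_distrib_left)
  finally show ?thesis .
qed

lemma age_dist:
  fixes f :: "nat \<Rightarrow> real"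
  shows "(\<Sum>xs\<in>{xs :: bool list. length xs = Suc n}. hist_prob p xs * f (age0 (seq_of xs) n))
    = (\<Sum>k<n. p * (1 - p) ^ k * f k) + (1 - p) ^ n * f n"
proof (induction n arbitrary: f)
  case 0
  have "(\<Sum>xs\<in>{xs :: bool list. length xs = Suc 0}. hist_prob p xs * f (age0 (seq_of xs) 0))
      = (\<Sum>xs\<in>{xs :: bool list. length xs = Suc 0}. hist_prob p xs) * f 0"
    by (simp add: sum_distrib_right)
  then show ?case using hp_sum1[of p "Suc 0"] by simp
next
  case (Suc n)
  have ag: "age0 (seq_of (ys @ [b])) (Suc n) = (if b then 0 else Suc (age0 (seq_of ys) n))"
    if "length ys = Suc n" for ys b
  proof -
    have 1: "seq_of (ys @ [b]) (n + 2) = b" using that seq_of_append_right[of 1 ys "[b]"]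
      by (simp add: seq_of_def)
    have 2: "\<forall>b. age0 (seq_of (ys @ [b])) n = age0 (seq_of ys) n"
      using that by (intro allI age0_local') (simp add: seq_of_append_left)
    have "age0 (seq_of (ys @ [b])) (Suc n) = (if seq_of (ys @ [b]) (n + 2) then 0 else Suc (age0 (seq_of (ys @ [b])) n))"
      by simp
    then show ?thesis using 1 2 by presburger
  qed
  have "(\<Sum>xs\<in>{xs :: bool list. length xs = Suc (Suc n)}. hist_prob p xs * f (age0 (seq_of xs) (Suc n)))
     = (\<Sum>ys\<in>{ys. length ys = Suc n}. hist_prob p ys * (p * f 0 + (1 - p) * f (Suc (age0 (seq_of ys) n))))"
  proof (subst sum_lists_snoc, rule sum.cong[OF refl])
    fix ys :: "bool list" assume "ys \<in> {ys. length ys = Suc n}"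
    then have l: "length ys = Suc n" by simp
    have h1: "hist_prob p (ys @ [True]) = hist_prob p ys * p" by (simp add: hp_append hist_prob_def)
    have h2: "hist_prob p (ys @ [False]) = hist_prob p ys * (1 - p)" by (simp add: hp_append hist_prob_def)
    show "hist_prob p (ys @ [True]) * f (age0 (seq_of (ys @ [True])) (Suc n)) +
          hist_prob p (ys @ [False]) * f (age0 (seq_of (ys @ [False])) (Suc n)) =
          hist_prob p ys * (p * f 0 + (1 - p) * f (Suc (age0 (seq_of ys) n)))"
      unfolding ag[OF l, of True] ag[OF l, of False] h1 h2 by (simp add: algebra_simps)
  qed
  also have "\<dots> = p * f 0 * (\<Sum>ys\<in>{ys. length ys = Suc n}. hist_prob p ys)
      + (1 - p) * (\<Sum>ys\<in>{ys :: bool list. length ys = Suc n}. hist_prob p ys * f (Suc (age0 (seq_of ys) n)))"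
    by (rule sum_aux)
  also have "\<dots> = p * f 0 + (1 - p) * ((\<Sum>k<n. p * (1 - p) ^ k * f (Suc k)) + (1 - p) ^ n * f (Suc n))"
    using Suc.IH[of "\<lambda>k. f (Suc k)"] hp_sum1[of p "Suc n"] by simp
  also have "\<dots> = (\<Sum>k<Suc n. p * (1 - p) ^ k * f k) + (1 - p) ^ Suc n * f (Suc n)"
  proof -
    have e: "(\<Sum>k<Suc n. p * (1 - p) ^ k * f k) = p * (1 - p) ^ 0 * f 0 + (\<Sum>k<n. p * (1 - p) ^ Suc k * f (Suc k))"
      by (rule sum.lessThan_Suc_shift)
    show ?thesis unfolding e by (simp add: sum_distrib_left mult_ac distrib_left)
  qed
  finally show ?case .
qed

lemma wd_dist:
  fixes g :: "nat \<Rightarrow> real"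
  assumes "w \<le> M"
  shows "(\<Sum>zs\<in>{zs :: bool list. length zs = M}. hist_prob p zs * g (win_dist w (seq_of zs) 0))
    = (\<Sum>t<w. p * (1 - p) ^ t * g (Suc t)) + (1 - p) ^ w * g 0"
  using assms
proof (induction w arbitrary: M g)
  case 0
  have "(\<Sum>zs\<in>{zs :: bool list. length zs = M}. hist_prob p zs * g (win_dist 0 (seq_of zs) 0))
      = (\<Sum>zs\<in>{zs :: bool list. length zs = M}. hist_prob p zs) * g 0"
    by (simp add: sum_distrib_right wd_zero_w)
  then show ?case using hp_sum1[of p M] by simp
next
  case (Suc w)
  obtain M' where M: "M = Suc M'" "w \<le> M'" using Suc.prems by (cases M) auto
  define g' where "g' d = (if d = 0 then g 0 else g (Suc d))" for d
  have wc: "win_dist (Suc w) (seq_of (b # zs)) 0 = (if b then 1 else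
     (if win_dist w (seq_of zs) 0 = 0 then 0 else Suc (win_dist w (seq_of zs) 0)))" for b zs
  proof -
    have 1: "\<forall>b. win_dist w (seq_of (b # zs)) (Suc 0) = win_dist w (seq_of zs) 0"
      by (intro allI wd_local2) (auto simp: seq_of_Cons_Suc)
    have 2: "seq_of (b # zs) (Suc 0) = b" by (simp add: seq_of_def)
    show ?thesis unfolding wd_cons[of w _ 0] 2 using 1 by presburger
  qed
  have "(\<Sum>zs\<in>{zs :: bool list. length zs = M}. hist_prob p zs * g (win_dist (Suc w) (seq_of zs) 0))
     = (\<Sum>zs\<in>{zs. length zs = M'}. hist_prob p zs * (p * g 1 + (1 - p) * g' (win_dist w (seq_of zs) 0)))"
    unfolding M by (subst sum_lists_Suc) (intro sum.cong refl, simp add: wc hp_Cons g'_def algebra_simps)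
  also have "\<dots> = p * g 1 * (\<Sum>zs\<in>{zs. length zs = M'}. hist_prob p zs)
     + (1 - p) * (\<Sum>zs\<in>{zs :: bool list. length zs = M'}. hist_prob p zs * g' (win_dist w (seq_of zs) 0))"
    by (rule sum_aux)
  also have "\<dots> = p * g 1 + (1 - p) * ((\<Sum>t<w. p * (1 - p) ^ t * g' (Suc t)) + (1 - p) ^ w * g' 0)"
    using Suc.IH[of M' g'] M hp_sum1[of p M'] by simp
  also have "\<dots> = (\<Sum>t<Suc w. p * (1 - p) ^ t * g (Suc t)) + (1 - p) ^ Suc w * g 0"
  proof -
    have e: "(\<Sum>t<Suc w. p * (1 - p) ^ t * g (Suc t)) = p * (1 - p) ^ 0 * g (Suc 0) + (\<Sum>t<w. p * (1 - p) ^ Suc t * g (Suc (Suc t)))"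
      by (rule sum.lessThan_Suc_shift)
    show ?thesis unfolding e by (simp add: sum_distrib_left mult_ac distrib_left g'_def)
  qed
  finally show ?case .
qed

lemma cesaro:
  fixes X :: "nat \<Rightarrow> real"
  assumes X: "X \<longlonglongrightarrow> L"
  shows "(\<lambda>T. (1 / real T) * (\<Sum>n<T. X n)) \<longlonglongrightarrow> L"
proof (rule LIMSEQ_I)
  fix r :: real assume r: "0 < r"
  obtain N where N: "\<forall>n\<ge>N. norm (X n - L) < r / 2" using LIMSEQ_D[OF X, of "r/2"] r by auto
  define M where "M = (\<Sum>n<N. \<bar>X n - L\<bar>)"
  have M0: "M \<ge> 0" unfolding M_def by (simp add: sum_nonneg)
  obtain K :: nat where K: "real K > 2 * M / r" using reals_Archimedean2 by blast
  show "\<exists>no. \<forall>T\<ge>no. norm ((1 / real T) * (\<Sum>n<T. X n) - L) < r"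
  proof (intro exI allI impI)
    fix T assume T: "T \<ge> max (Suc N) (Suc K)"
    then have Tp: "real T > 0" by simp
    have TN: "N \<le> T" using T by simp
    have "(\<Sum>n<T. X n - L) = (\<Sum>n<T. X n) - real T * L"
      by (simp add: sum_subtractf)
    then have "(1 / real T) * (\<Sum>n<T. X n - L) = (1 / real T) * (\<Sum>n<T. X n) - L"
      using Tp by (simp add: right_diff_distrib)
    then have "(1 / real T) * (\<Sum>n<T. X n) - L = (1 / real T) * (\<Sum>n<T. X n - L)" by simp
    also have "(\<Sum>n<T. X n - L) = (\<Sum>n<N. X n - L) + (\<Sum>n\<in>{N..<T}. X n - L)"
    proof -
      have "(\<Sum>n\<in>{0..<N}. X n - L) + (\<Sum>n\<in>{N..<T}. X n - L) = (\<Sum>n\<in>{0..<T}. X n - L)"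
        by (rule sum.atLeastLessThan_concat) (simp_all add: TN)
      then show ?thesis by (simp add: atLeast0LessThan)
    qed
    finally have eq: "(1 / real T) * (\<Sum>n<T. X n) - L = (1 / real T) * ((\<Sum>n<N. X n - L) + (\<Sum>n\<in>{N..<T}. X n - L))" .
    have b1: "\<bar>\<Sum>n<N. X n - L\<bar> \<le> M" unfolding M_def by (rule sum_abs)
    have b2: "\<bar>\<Sum>n\<in>{N..<T}. X n - L\<bar> \<le> real T * (r / 2)"
    proof -
      have "\<bar>\<Sum>n\<in>{N..<T}. X n - L\<bar> \<le> (\<Sum>n\<in>{N..<T}. \<bar>X n - L\<bar>)" by (rule sum_abs)
      also have "\<dots> \<le> (\<Sum>n\<in>{N..<T}. r / 2)" using N by (intro sum_mono) (simp add: less_imp_le)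
      also have "\<dots> = real (T - N) * (r / 2)" by simp
      also have "\<dots> \<le> real T * (r / 2)" using r by (intro mult_right_mono) auto
      finally show ?thesis .
    qed
    have "\<bar>(1 / real T) * ((\<Sum>n<N. X n - L) + (\<Sum>n\<in>{N..<T}. X n - L))\<bar>
        \<le> (1 / real T) * (M + real T * (r / 2))"
    proof -
      have "\<bar>(\<Sum>n<N. X n - L) + (\<Sum>n\<in>{N..<T}. X n - L)\<bar> \<le> M + real T * (r / 2)"
      proof -
        have "\<bar>(\<Sum>n<N. X n - L) + (\<Sum>n\<in>{N..<T}. X n - L)\<bar> \<le> \<bar>\<Sum>n<N. X n - L\<bar> + \<bar>\<Sum>n\<in>{N..<T}. X n - L\<bar>"
          by (rule abs_triangle_ineq)
        also have "\<dots> \<le> M + real T * (r / 2)" using b1 b2 by (rule add_mono)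
        finally show ?thesis .
      qed
      then show ?thesis using Tp by (simp add: abs_mult divide_right_mono)
    qed
    also have "\<dots> = M / real T + r / 2" using Tp by (simp add: distrib_left)
    also have "\<dots> < r"
    proof -
      have "real K \<le> real T" using T by simp
      then have "real T > 2 * M / r" using K by linarith
      then have "2 * M < r * real T" using r by (simp add: divide_less_eq mult.commute)
      then have "M / real T < r / 2" using Tp by (simp add: divide_less_eq)
      then show ?thesis by linarith
    qed
    finally show "norm ((1 / real T) * (\<Sum>n<T. X n) - L) < r" using eq by simp
  qed
qed



locale model = sysw +
  fixes p \<gamma> :: real
  assumes p0: "0 < p" and p1: "p < 1" and g0: "\<gamma> > 0"
begin

definition R :: "nat \<Rightarrow> nat \<Rightarrow> real" where
  "R i d = log 2 (1 + \<gamma> * act i d) / 2"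

definition H :: "nat \<Rightarrow> real" where
  "H i = (\<Sum>t<w. p * (1 - p) ^ t * R i (Suc t)) + (1 - p) ^ w * R i 0"

definition Ex :: "nat \<Rightarrow> real" where
  "Ex n = (\<Sum>k<n. p * (1 - p) ^ k * H k) + (1 - p) ^ n * H n"

lemma exp_slot:
  assumes "Suc n + w \<le> N"
  shows "(\<Sum>xs\<in>{xs :: bool list. length xs = N}. hist_prob p xs * R (age0 (seq_of xs) n) (win_dist w (seq_of xs) (Suc n))) = Ex n"
proof -
  define M where "M = N - Suc n"
  have NM: "N = Suc n + M" "w \<le> M" using assms M_def by auto
  have "(\<Sum>xs\<in>{xs :: bool list. length xs = N}. hist_prob p xs * R (age0 (seq_of xs) n) (win_dist w (seq_of xs) (Suc n)))
      = (\<Sum>ys\<in>{ys :: bool list. length ys = Suc n}. \<Sum>zs\<in>{zs :: bool list. length zs = M}.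
          hist_prob p (ys @ zs) * R (age0 (seq_of (ys @ zs)) n) (win_dist w (seq_of (ys @ zs)) (Suc n)))"
    unfolding NM(1) by (rule sum_lists_append)
  also have "\<dots> = (\<Sum>ys\<in>{ys :: bool list. length ys = Suc n}. hist_prob p ys *
       (\<Sum>zs\<in>{zs :: bool list. length zs = M}. hist_prob p zs * R (age0 (seq_of ys) n) (win_dist w (seq_of zs) 0)))"
  proof (intro sum.cong refl)
    fix ys :: "bool list" assume "ys \<in> {ys. length ys = Suc n}"
    then have l: "length ys = Suc n" by simp
    have a: "age0 (seq_of (ys @ zs)) n = age0 (seq_of ys) n" for zs
      using l by (intro age0_local') (simp add: seq_of_append_left)
    have d: "win_dist w (seq_of (ys @ zs)) (Suc n) = win_dist w (seq_of zs) 0" for zs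
      by (intro wd_local2) (metis atLeastAtMost_iff l seq_of_append_right add_0)
    show "(\<Sum>zs\<in>{zs. length zs = M}. hist_prob p (ys @ zs) * R (age0 (seq_of (ys @ zs)) n) (win_dist w (seq_of (ys @ zs)) (Suc n)))
        = hist_prob p ys * (\<Sum>zs\<in>{zs. length zs = M}. hist_prob p zs * R (age0 (seq_of ys) n) (win_dist w (seq_of zs) 0))"
      unfolding a d hp_append sum_distrib_left by (simp add: mult.assoc)
  qed
  also have "\<dots> = (\<Sum>ys\<in>{ys :: bool list. length ys = Suc n}. hist_prob p ys * H (age0 (seq_of ys) n))"
    using wd_dist[OF NM(2)] by (simp add: H_def)
  also have "\<dots> = Ex n" by (simp add: age_dist Ex_def)
  finally show ?thesis .
qed

lemma avg_formula:
  assumes "T \<ge> 1"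
  shows "avg_throughput p \<gamma> w (stat_policy B w Afun) T = (1 / real T) * (\<Sum>n<T. Ex n)"
proof -
  have inner: "(\<Sum>\<tau>=1..T. log 2 (1 + \<gamma> * stat_policy B w Afun \<tau> (seq_of xs) u) / 2)
      = (\<Sum>n<T. R (age0 (seq_of xs) n) (win_dist w (seq_of xs) (Suc n)))" for xs u
    by (simp add: sum.atLeast1_atMost_eq stat_policy_act R_def)
  have int: "(LBINT u:{0..1::real}. c) = c" for c :: real
    by (simp add: set_integral_const)
  have "avg_throughput p \<gamma> w (stat_policy B w Afun) T
      = (1 / real T) * (\<Sum>xs\<in>{xs :: bool list. length xs = T + w}. hist_prob p xs *
          (\<Sum>n<T. R (age0 (seq_of xs) n) (win_dist w (seq_of xs) (Suc n))))"
    unfolding avg_throughput_def inner int ..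
  also have "\<dots> = (1 / real T) * (\<Sum>n<T. \<Sum>xs\<in>{xs :: bool list. length xs = T + w}. hist_prob p xs *
          R (age0 (seq_of xs) n) (win_dist w (seq_of xs) (Suc n)))"
    by (simp add: sum_distrib_left sum.swap[of _ "{..<T}"])
  also have "\<dots> = (1 / real T) * (\<Sum>n<T. Ex n)"
    by (intro arg_cong[where f="\<lambda>x. (1 / real T) * x"] sum.cong refl exp_slot) auto
  finally show ?thesis .
qed

lemma R_bounds: "0 \<le> R i d \<and> R i d \<le> log 2 (1 + \<gamma> * B) / 2"
proof -
  have a: "0 \<le> act i d" "act i d \<le> B" using act_le_B by auto
  have "0 \<le> \<gamma> * act i d" using a g0 by simp
  then have pos: "0 < 1 + \<gamma> * act i d" by linarith
  have "0 \<le> log 2 (1 + \<gamma> * act i d)" using pos \<open>0 \<le> \<gamma> * act i d\<close> by (subst zero_le_log_cancel_iff) auto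
  moreover have "log 2 (1 + \<gamma> * act i d) \<le> log 2 (1 + \<gamma> * B)"
  proof -
    have "0 < 1 + \<gamma> * B" using g0 Bpos by (simp add: add_pos_pos)
    moreover have "1 + \<gamma> * act i d \<le> 1 + \<gamma> * B" using a g0 by (simp add: mult_left_mono)
    ultimately show ?thesis using pos by (subst log_le_cancel_iff) auto
  qed
  ultimately show ?thesis by (simp add: R_def)
qed

definition CB :: real where "CB = log 2 (1 + \<gamma> * B) / 2"

lemma H_bounds: "0 \<le> H i \<and> H i \<le> CB"
proof -
  have s: "(\<Sum>t<w. p * (1 - p) ^ t) + (1 - p) ^ w = 1"
  proof (induction w)
    case 0 then show ?case by simp
  next
    case (Suc w) then show ?case by (simp add: algebra_simps)
  qed
  have "H i \<le> (\<Sum>t<w. p * (1 - p) ^ t * CB) + (1 - p) ^ w * CB"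
    unfolding H_def CB_def using R_bounds p0 p1
    by (intro add_mono sum_mono mult_left_mono) auto
  also have "\<dots> = CB" using s by (simp flip: sum_distrib_right distrib_right)
  finally have "H i \<le> CB" .
  moreover have "0 \<le> H i" unfolding H_def using R_bounds p0 p1 by (intro add_nonneg_nonneg sum_nonneg mult_nonneg_nonneg) auto
  ultimately show ?thesis by simp
qed

definition Linf :: real where "Linf = (\<Sum>k. p * (1 - p) ^ k * H k)"

lemma summable_H: "summable (\<lambda>k. p * (1 - p) ^ k * H k)"
proof (rule summable_comparison_test)
  show "\<exists>N. \<forall>n\<ge>N. norm (p * (1 - p) ^ n * H n) \<le> CB * (p * (1 - p) ^ n)"
    using H_bounds p0 p1 by (intro exI[of _ 0]) (auto simp: abs_mult mult_left_mono mult.commute mult.left_commute)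
  show "summable (\<lambda>n. CB * (p * (1 - p) ^ n))" using p0 p1
    by (intro summable_mult summable_geometric) auto
qed

lemma Ex_lim: "Ex \<longlonglongrightarrow> Linf"
proof -
  have 1: "(\<lambda>n. \<Sum>k<n. p * (1 - p) ^ k * H k) \<longlonglongrightarrow> Linf"
    unfolding Linf_def using summable_H by (simp add: summable_LIMSEQ)
  have 2: "(\<lambda>n. (1 - p) ^ n * H n) \<longlonglongrightarrow> 0"
  proof (rule Lim_null_comparison)
    show "\<forall>\<^sub>F n in sequentially. norm ((1 - p) ^ n * H n) \<le> (1 - p) ^ n * CB"
      using H_bounds p0 p1 by (auto simp: abs_mult intro!: mult_left_mono)
    show "(\<lambda>n. (1 - p) ^ n * CB) \<longlonglongrightarrow> 0" using p0 p1
      by (intro tendsto_mult_left_zero LIMSEQ_power_zero) auto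
  qed
  show ?thesis unfolding Ex_def[abs_def] using tendsto_add[OF 1 2] by simp
qed

lemma avg_lim: "(\<lambda>T. avg_throughput p \<gamma> w (stat_policy B w Afun) T) \<longlonglongrightarrow> Linf"
proof -
  have "(\<lambda>T. (1 / real T) * (\<Sum>n<T. Ex n)) \<longlonglongrightarrow> Linf" by (rule cesaro[OF Ex_lim])
  moreover have "\<forall>\<^sub>F T in sequentially. (1 / real T) * (\<Sum>n<T. Ex n) = avg_throughput p \<gamma> w (stat_policy B w Afun) T"
    by (rule eventually_sequentiallyI[of 1]) (simp add: avg_formula)
  ultimately show ?thesis by (rule Lim_transform_eventually)
qed

end

context afun_ok begin
lemma ind_batt_sum: "ind_batt B Afun (Suc k) = B - (\<Sum>i\<le>k. induced_seq B Afun i)"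
  by (induction k) (simp_all add: induced_seq_def)
end

lemma tri_sum:
  fixes a :: "nat \<Rightarrow> real"
  shows "(\<Sum>t<w. \<Sum>k<w - t. a (k + t)) = (\<Sum>m<w. real (Suc m) * a m)"
proof (induction w)
  case 0 then show ?case by simp
next
  case (Suc w)
  have "(\<Sum>t<Suc w. \<Sum>k<Suc w - t. a (k + t)) = (\<Sum>t<Suc w. (\<Sum>k<w - t. a (k + t)) + a w)"
  proof (intro sum.cong refl)
    fix t assume "t \<in> {..<Suc w}"
    then have "Suc w - t = Suc (w - t)" "w - t + t = w" by auto
    then show "(\<Sum>k<Suc w - t. a (k + t)) = (\<Sum>k<w - t. a (k + t)) + a w" by simp
  qed
  also have "\<dots> = (\<Sum>t<w. \<Sum>k<w - t. a (k + t)) + real (Suc w) * a w"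
    by (simp add: sum.distrib)
  finally show ?case using Suc.IH by simp
qed

context model begin

definition aa :: "nat \<Rightarrow> real" where "aa m = p^2 * (1 - p)^m * R m 1"

lemma R_shift: "R k (Suc t) = R (k + t) 1"
  by (simp add: R_def act_def)

lemma summable_geo: "summable (\<lambda>m. c * (1 - p) ^ m)"
  using p0 p1 by (intro summable_mult summable_geometric) auto

lemma summable_bounded:
  fixes f :: "nat \<Rightarrow> real"
  assumes "\<And>m. \<bar>f m\<bar> \<le> c * (1 - p) ^ m"
  shows "summable f"
  by (rule summable_comparison_test[OF _ summable_geo[of c]]) (use assms in auto)

lemma R_abs: "\<bar>R i d\<bar> \<le> CB" using R_bounds by (simp add: CB_def)

lemma CB0: "0 \<le> CB" using R_bounds[of 0 0] by (simp add: CB_def)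

lemma summable_aa_shift: "summable (\<lambda>k. aa (k + t))"
proof (rule summable_bounded[of _ "p^2 * CB"])
  fix m
  have "\<bar>aa (m + t)\<bar> = p^2 * (1 - p)^(m + t) * \<bar>R (m + t) 1\<bar>"
    using p0 p1 by (simp add: aa_def abs_mult)
  also have "\<dots> \<le> p^2 * (1 - p)^m * CB"
  proof -
    have "(1 - p)^(m + t) \<le> (1 - p)^m" using p0 p1 by (simp add: power_decreasing)
    then show ?thesis using R_abs[of "m+t" 1] CB0 p0 p1
      by (intro mult_mono mult_left_mono) auto
  qed
  finally show "\<bar>aa (m + t)\<bar> \<le> p^2 * CB * (1 - p)^m" by (simp add: mult_ac)
qed

lemma summable_T2: "summable (\<lambda>k. p * (1 - p) ^ (k + w) * R k 0)"
proof (rule summable_bounded[of _ "p * CB"])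
  fix m
  have "\<bar>p * (1 - p) ^ (m + w) * R m 0\<bar> = p * (1 - p)^(m + w) * \<bar>R m 0\<bar>"
    using p0 p1 by (simp add: abs_mult)
  also have "\<dots> \<le> p * (1 - p)^m * CB"
  proof -
    have "(1 - p)^(m + w) \<le> (1 - p)^m" using p0 p1 by (simp add: power_decreasing)
    then show ?thesis using R_abs[of m 0] CB0 p0 p1
      by (intro mult_mono mult_left_mono) auto
  qed
  finally show "\<bar>p * (1 - p) ^ (m + w) * R m 0\<bar> \<le> p * CB * (1 - p)^m" by (simp add: mult_ac)
qed

lemma Linf_split: "Linf = (\<Sum>k. \<Sum>t<w. aa (k + t)) + (\<Sum>k. p * (1 - p) ^ (k + w) * R k 0)"
proof -
  have e: "p * (1 - p) ^ k * H k = (\<Sum>t<w. aa (k + t)) + p * (1 - p) ^ (k + w) * R k 0" for k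
  proof -
    have "p * (1 - p) ^ k * H k = (\<Sum>t<w. p * (1 - p) ^ k * (p * (1 - p) ^ t * R k (Suc t))) + p * (1 - p) ^ k * ((1 - p) ^ w * R k 0)"
      unfolding H_def distrib_left sum_distrib_left ..
    also have "(\<Sum>t<w. p * (1 - p) ^ k * (p * (1 - p) ^ t * R k (Suc t))) = (\<Sum>t<w. aa (k + t))"
    proof (intro sum.cong refl)
      fix t
      show "p * (1 - p) ^ k * (p * (1 - p) ^ t * R k (Suc t)) = aa (k + t)"
        unfolding aa_def R_shift power_add power2_eq_square by (simp only: mult_ac)
    qed
    also have "p * (1 - p) ^ k * ((1 - p) ^ w * R k 0) = p * (1 - p) ^ (k + w) * R k 0"
      unfolding power_add by (simp only: mult_ac)
    finally show ?thesis .
  qed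
  have s1: "summable (\<lambda>k. \<Sum>t<w. aa (k + t))"
    by (rule summable_sum) (rule summable_aa_shift)
  show ?thesis unfolding Linf_def e using suminf_add[OF s1 summable_T2] by simp
qed

lemma first_part: "(\<Sum>k. \<Sum>t<w. aa (k + t)) = (\<Sum>m<w. real (Suc m) * aa m) + real w * (\<Sum>k. aa (k + w))"
proof -
  have "(\<Sum>k. \<Sum>t<w. aa (k + t)) = (\<Sum>t<w. \<Sum>k. aa (k + t))"
    by (rule suminf_sum) (rule summable_aa_shift)
  also have "\<dots> = (\<Sum>t<w. (\<Sum>k<w - t. aa (k + t)) + (\<Sum>k. aa (k + w)))"
  proof (intro sum.cong refl)
    fix t assume "t \<in> {..<w}"
    then have tw: "w - t + t = w" by simp
    have "(\<Sum>k. aa (k + t)) = (\<Sum>k. aa (k + (w - t) + t)) + (\<Sum>k<w - t. aa (k + t))"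
      using suminf_split_initial_segment[OF summable_aa_shift[of t], of "w - t"] by simp
    also have "(\<Sum>k. aa (k + (w - t) + t)) = (\<Sum>k. aa (k + w))"
      using tw by (simp add: add.assoc)
    finally show "(\<Sum>k. aa (k + t)) = (\<Sum>k<w - t. aa (k + t)) + (\<Sum>k. aa (k + w))" by simp
  qed
  also have "\<dots> = (\<Sum>m<w. real (Suc m) * aa m) + real w * (\<Sum>k. aa (k + w))"
    by (simp add: sum.distrib tri_sum)
  finally show ?thesis .
qed

lemma Linf_eq_T_inf: "Linf = T_inf p \<gamma> B w (induced_seq B Afun)"
proof -
  have T1: "(\<Sum>m<w. real (Suc m) * aa m)
      = (\<Sum>k=1..w. p^2 * (1 - p)^(k - 1) * (real k / 2) * log 2 (1 + \<gamma> * B / real k))"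
  proof -
    have "(\<Sum>k=1..w. p^2 * (1 - p)^(k - 1) * (real k / 2) * log 2 (1 + \<gamma> * B / real k))
       = (\<Sum>m<w. p^2 * (1 - p)^m * (real (Suc m) / 2) * log 2 (1 + \<gamma> * B / real (Suc m)))"
      by (simp add: sum.atLeast1_atMost_eq)
    also have "\<dots> = (\<Sum>m<w. real (Suc m) * aa m)"
    proof (intro sum.cong refl)
      fix m assume "m \<in> {..<w}"
      then have "Suc m - w = 0" "min (Suc m) w = Suc m" by auto
      then show "p^2 * (1 - p)^m * (real (Suc m) / 2) * log 2 (1 + \<gamma> * B / real (Suc m)) = real (Suc m) * aa m"
        by (simp add: aa_def R_def act_def)
    qed
    finally show ?thesis by simp
  qed
  have T3: "real w * (\<Sum>k. aa (k + w))
      = (\<Sum>k. p^2 * (1 - p)^(k + w) * (real w / 2) * log 2 (1 + \<gamma> * (B - (\<Sum>i\<le>k. induced_seq B Afun i)) / real w))"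
  proof -
    have "real w * (\<Sum>k. aa (k + w)) = (\<Sum>k. real w * aa (k + w))"
      by (rule suminf_mult[symmetric]) (rule summable_aa_shift)
    also have "\<dots> = (\<Sum>k. p^2 * (1 - p)^(k + w) * (real w / 2) * log 2 (1 + \<gamma> * (B - (\<Sum>i\<le>k. induced_seq B Afun i)) / real w))"
    proof (intro suminf_cong)
      fix k
      have a1: "act (k + w) 1 = ind_batt B Afun (Suc k) / real w"
      proof -
        have "k + w + 1 - w = Suc k" "min (k + w + 1) w = w" by auto
        then show ?thesis unfolding act_def by simp
      qed
      have r1: "R (k + w) 1 = log 2 (1 + \<gamma> * (B - (\<Sum>i\<le>k. induced_seq B Afun i)) / real w) / 2"
        unfolding R_def a1 ind_batt_sum by (simp only: times_divide_eq_right)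
      show "real w * aa (k + w) = p^2 * (1 - p)^(k + w) * (real w / 2) * log 2 (1 + \<gamma> * (B - (\<Sum>i\<le>k. induced_seq B Afun i)) / real w)"
        unfolding aa_def r1 by (simp only: mult_ac times_divide_eq_right times_divide_eq_left)
    qed
    finally show ?thesis .
  qed
  have T2: "(\<Sum>k. p * (1 - p) ^ (k + w) * R k 0) = (\<Sum>j. p * (1 - p)^(j + w) * (log 2 (1 + \<gamma> * induced_seq B Afun j) / 2))"
    by (simp add: R_def act_def)
  show ?thesis using Linf_split first_part T1 T2 T3 unfolding T_inf_def by linarith
qed

lemma avg_lim_T: "(\<lambda>T. avg_throughput p \<gamma> w (stat_policy B w Afun) T) \<longlonglongrightarrow> T_inf p \<gamma> B w (induced_seq B Afun)"
  using avg_lim Linf_eq_T_inf by simp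

end

lemma ln_tangent: "0 < (a::real) \<Longrightarrow> 0 < b \<Longrightarrow> ln b \<le> ln a + (b - a) / a"
proof -
  assume a: "0 < a" and b: "0 < b"
  have "ln (b / a) \<le> b / a - 1" by (rule ln_le_minus_one) (simp add: a b)
  moreover have "ln (b / a) = ln b - ln a" using a b by (simp add: ln_div)
  moreover have "b / a - 1 = (b - a) / a" using a by (simp add: field_simps)
  ultimately show ?thesis by simp
qed

lemma ln_concave2:
  fixes a b t :: real
  assumes a: "0 < a" and b: "0 < b" and t: "0 \<le> t" "t \<le> 1"
  shows "(1 - t) * ln a + t * ln b \<le> ln ((1 - t) * a + t * b)"
proof -
  define z where "z = (1 - t) * a + t * b"
  have z: "0 < z"
  proof (cases "t = 0")
    case True then show ?thesis using a by (simp add: z_def)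
  next
    case False
    then have "0 < t" using t by simp
    then have "0 < t * b" using b by (rule mult_pos_pos)
    moreover have "0 \<le> (1 - t) * a" using t a by simp
    ultimately show ?thesis unfolding z_def by linarith
  qed
  have 1: "ln a \<le> ln z + (a - z) / z" by (rule ln_tangent[OF z a])
  have 2: "ln b \<le> ln z + (b - z) / z" by (rule ln_tangent[OF z b])
  have "(1 - t) * ln a + t * ln b \<le> (1 - t) * (ln z + (a - z) / z) + t * (ln z + (b - z) / z)"
    using 1 2 t by (intro add_mono mult_left_mono) auto
  also have "\<dots> = ln z + ((1 - t) * (a - z) + t * (b - z)) / z"
    using z by (simp add: field_simps)
  also have "(1 - t) * (a - z) + t * (b - z) = 0" unfolding z_def by (simp add: algebra_simps)
  finally show ?thesis unfolding z_def by simp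
qed

lemma ln_concave_strict:
  fixes a b :: real
  assumes a: "0 < a" and b: "0 < b" and ab: "a \<noteq> b"
  shows "(ln a + ln b) / 2 < ln ((a + b) / 2)"
proof -
  have "a * b < ((a + b) / 2)^2"
  proof -
    have "a - b \<noteq> 0" using ab by simp
    then have "0 < (a - b)^2" by simp
    then show ?thesis by (simp add: power2_eq_square field_simps)
  qed
  then have "ln (a * b) < ln (((a + b) / 2)^2)" using a b by (subst ln_less_cancel_iff) auto
  moreover have "ln (a * b) = ln a + ln b" using a b by (simp add: ln_mult)
  moreover have "ln (((a + b) / 2)^2) = 2 * ln ((a + b) / 2)" using a b by (simp add: ln_realpow)
  ultimately show ?thesis by simp
qed

locale params =
  fixes p \<gamma> B :: real and w :: nat
  assumes p0: "0 < p" and p1: "p < 1" and g0: "0 < \<gamma>" and Bpos: "0 < B" and w1: "1 \<le> w"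
begin

definition Rs :: "(nat \<Rightarrow> real) \<Rightarrow> nat \<Rightarrow> real" where
  "Rs x k = B - (\<Sum>i\<le>k. x i)"

definition F2 :: "(nat \<Rightarrow> real) \<Rightarrow> nat \<Rightarrow> real" where
  "F2 x j = p * (1 - p) ^ (j + w) * (log 2 (1 + \<gamma> * x j) / 2)"

definition F3 :: "(nat \<Rightarrow> real) \<Rightarrow> nat \<Rightarrow> real" where
  "F3 x k = p^2 * (1 - p) ^ (k + w) * (real w / 2) * log 2 (1 + \<gamma> * Rs x k / real w)"

definition C0 :: real where
  "C0 = (\<Sum>k=1..w. p^2 * (1 - p)^(k - 1) * (real k / 2) * log 2 (1 + \<gamma> * B / real k))"

abbreviation T where "T x \<equiv> T_inf p \<gamma> B w x"

lemma T_eq: "T x = C0 + suminf (F2 x) + suminf (F3 x)"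
  unfolding T_inf_def C0_def F2_def[abs_def] F3_def[abs_def] Rs_def ..

lemma adm_facts:
  assumes "admissible B x"
  shows "0 \<le> x j" "x j \<le> B" "0 \<le> Rs x k" "Rs x k \<le> B" "(\<Sum>i\<le>k. x i) \<le> suminf x"
proof -
  have nn: "\<forall>j. 0 \<le> x j" and s: "summable x" and le: "suminf x \<le> B"
    using assms unfolding admissible_def by auto
  show "0 \<le> x j" using nn by simp
  have sk: "(\<Sum>i\<le>k. x i) \<le> suminf x" for k
    by (rule sum_le_suminf[OF s]) (use nn in auto)
  show "(\<Sum>i\<le>k. x i) \<le> suminf x" by (rule sk)
  have "x j \<le> (\<Sum>i\<le>j. x i)" using nn by (intro member_le_sum) auto
  then show "x j \<le> B" using sk[of j] le by simp
  show "0 \<le> Rs x k" using sk[of k] le by (simp add: Rs_def)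
  show "Rs x k \<le> B" using nn by (simp add: Rs_def sum_nonneg)
qed

lemma lg_bounds:
  assumes "0 \<le> v" "v \<le> B"
  shows "0 \<le> log 2 (1 + \<gamma> * v) \<and> log 2 (1 + \<gamma> * v) \<le> log 2 (1 + \<gamma> * B)"
proof -
  have gv: "0 \<le> \<gamma> * v" using assms g0 by simp
  have "\<gamma> * v \<le> \<gamma> * B" using assms g0 by (simp add: mult_left_mono)
  moreover have "0 < 1 + \<gamma> * v" using gv by linarith
  ultimately show ?thesis using gv by (simp add: log_le_cancel_iff)
qed

definition CL :: real where "CL = log 2 (1 + \<gamma> * B)"

lemma CL0: "0 \<le> CL" using lg_bounds[of 0] Bpos by (simp add: CL_def)

lemma summable_geo_bound:
  fixes f :: "nat \<Rightarrow> real"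
  assumes "\<And>n. \<bar>f n\<bar> \<le> K * (1 - p) ^ n"
  shows "summable f"
proof (rule summable_comparison_test[of f "\<lambda>n. K * (1 - p) ^ n"])
  show "\<exists>N. \<forall>n\<ge>N. norm (f n) \<le> K * (1 - p) ^ n" using assms by auto
  show "summable (\<lambda>n. K * (1 - p) ^ n)" using p0 p1 by (intro summable_mult summable_geometric) auto
qed

lemma F2_abs: assumes "0 \<le> x j" "x j \<le> B" shows "\<bar>F2 x j\<bar> \<le> p * CL * (1 - p) ^ j"
proof -
  have l: "0 \<le> log 2 (1 + \<gamma> * x j)" "log 2 (1 + \<gamma> * x j) \<le> CL"
    using lg_bounds[OF assms] by (auto simp: CL_def)
  have pw: "(1 - p) ^ (j + w) \<le> (1 - p) ^ j" using p0 p1 by (simp add: power_decreasing)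
  have "\<bar>F2 x j\<bar> = p * (1 - p) ^ (j + w) * (log 2 (1 + \<gamma> * x j) / 2)"
    using p0 p1 l by (simp add: F2_def abs_mult)
  also have "\<dots> \<le> p * (1 - p) ^ j * CL"
    using pw l p0 p1 CL0 by (intro mult_mono mult_left_mono) auto
  finally show ?thesis by (simp add: mult_ac)
qed

lemma F3_abs: assumes "0 \<le> Rs x k" "Rs x k \<le> B" shows "\<bar>F3 x k\<bar> \<le> p^2 * real w * CL * (1 - p) ^ k"
proof -
  have wB: "B \<le> B * real w" using Bpos w1 by simp
  have v: "0 \<le> Rs x k / real w" "Rs x k / real w \<le> B"
    using assms w1 wB by (auto simp: divide_le_eq)
  have e: "\<gamma> * Rs x k / real w = \<gamma> * (Rs x k / real w)" by simp
  have l: "0 \<le> log 2 (1 + \<gamma> * Rs x k / real w)" "log 2 (1 + \<gamma> * Rs x k / real w) \<le> CL"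
    using lg_bounds[OF v] unfolding e by (auto simp: CL_def)
  have pw: "(1 - p) ^ (k + w) \<le> (1 - p) ^ k" using p0 p1 by (simp add: power_decreasing)
  have "\<bar>F3 x k\<bar> = p^2 * (1 - p) ^ (k + w) * (real w / 2) * log 2 (1 + \<gamma> * Rs x k / real w)"
    using p0 p1 l by (simp add: F3_def abs_mult)
  also have "\<dots> \<le> p^2 * (1 - p) ^ k * (real w) * CL"
    using pw l p0 p1 CL0 by (intro mult_mono mult_left_mono) auto
  finally show ?thesis by (simp add: mult_ac)
qed

lemma summable_F2: "admissible B x \<Longrightarrow> summable (F2 x)"
  by (rule summable_geo_bound[of _ "p * CL"]) (intro F2_abs; simp add: adm_facts)

lemma summable_F3: "admissible B x \<Longrightarrow> summable (F3 x)"
  by (rule summable_geo_bound[of _ "p^2 * real w * CL"]) (intro F3_abs; simp add: adm_facts)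

lemma T_diff:
  assumes "admissible B x" "admissible B y"
  shows "T y - T x = (\<Sum>j. F2 y j - F2 x j) + (\<Sum>k. F3 y k - F3 x k)"
proof -
  have "T y - T x = (suminf (F2 y) - suminf (F2 x)) + (suminf (F3 y) - suminf (F3 x))"
    unfolding T_eq by simp
  also have "\<dots> = (\<Sum>j. F2 y j - F2 x j) + (\<Sum>k. F3 y k - F3 x k)"
    using assms by (simp add: suminf_diff summable_F2 summable_F3)
  finally show ?thesis .
qed

lemma log2_concave:
  fixes a b t :: real
  assumes a: "0 < a" and b: "0 < b" and t: "0 \<le> t" "t \<le> 1"
  shows "(1 - t) * log 2 a + t * log 2 b \<le> log 2 ((1 - t) * a + t * b)"
proof -
  have "((1 - t) * ln a + t * ln b) / ln 2 \<le> ln ((1 - t) * a + t * b) / ln 2"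
    using ln_concave2[OF assms] by (simp add: divide_right_mono)
  then show ?thesis by (simp add: log_def add_divide_distrib)
qed

lemma log2_concave_strict:
  fixes a b :: real
  assumes a: "0 < a" and b: "0 < b" and ab: "a \<noteq> b"
  shows "(log 2 a + log 2 b) / 2 < log 2 ((a + b) / 2)"
proof -
  have "((ln a + ln b) / 2) / ln 2 < ln ((a + b) / 2) / ln 2"
    using ln_concave_strict[OF assms] by (intro divide_strict_right_mono) auto
  moreover have "(log 2 a + log 2 b) / 2 = ((ln a + ln b) / 2) / ln 2"
    unfolding log_def by (simp add: field_simps)
  moreover have "log 2 ((a + b) / 2) = ln ((a + b) / 2) / ln 2" by (simp add: log_def)
  ultimately show ?thesis by (simp only:)
qed

definition cmb :: "real \<Rightarrow> (nat \<Rightarrow> real) \<Rightarrow> (nat \<Rightarrow> real) \<Rightarrow> nat \<Rightarrow> real" where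
  "cmb t x y j = (1 - t) * x j + t * y j"

lemma adm_cmb:
  assumes x: "admissible B x" and y: "admissible B y" and t: "0 \<le> t" "t \<le> 1"
  shows "admissible B (cmb t x y)"
proof -
  have sx: "summable x" and sy: "summable y" using x y by (auto simp: admissible_def)
  have s: "summable (cmb t x y)" unfolding cmb_def[abs_def]
    using sx sy by (intro summable_add summable_mult)
  have "suminf (cmb t x y) = (1 - t) * suminf x + t * suminf y"
    unfolding cmb_def[abs_def] using sx sy
    by (simp add: suminf_add[symmetric] suminf_mult summable_mult)
  also have "\<dots> \<le> (1 - t) * B + t * B"
    using x y t by (intro add_mono mult_left_mono) (auto simp: admissible_def)
  finally have "suminf (cmb t x y) \<le> B" by (simp add: algebra_simps)
  moreover have "\<forall>j. 0 \<le> cmb t x y j" using x y t by (auto simp: admissible_def cmb_def)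
  ultimately show ?thesis using s by (simp add: admissible_def)
qed

lemma Rs_cmb: "Rs (cmb t x y) k = (1 - t) * Rs x k + t * Rs y k"
proof -
  have "(\<Sum>i\<le>k. cmb t x y i) = (1 - t) * (\<Sum>i\<le>k. x i) + t * (\<Sum>i\<le>k. y i)"
    unfolding cmb_def by (simp add: sum.distrib sum_distrib_left)
  then show ?thesis unfolding Rs_def by (simp add: algebra_simps)
qed

lemma F2_cmb:
  assumes "admissible B x" "admissible B y" "0 \<le> t" "t \<le> 1"
  shows "(1 - t) * F2 x j + t * F2 y j \<le> F2 (cmb t x y) j"
proof -
  have a: "0 < 1 + \<gamma> * x j" "0 < 1 + \<gamma> * y j"
    using adm_facts(1)[OF assms(1)] adm_facts(1)[OF assms(2)] g0
    by (auto intro: add_pos_nonneg)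
  have e: "1 + \<gamma> * cmb t x y j = (1 - t) * (1 + \<gamma> * x j) + t * (1 + \<gamma> * y j)"
    by (simp add: cmb_def algebra_simps)
  have c: "0 \<le> p * (1 - p) ^ (j + w) / 2" using p0 p1 by simp
  have "(1 - t) * F2 x j + t * F2 y j = p * (1 - p) ^ (j + w) / 2 * ((1 - t) * log 2 (1 + \<gamma> * x j) + t * log 2 (1 + \<gamma> * y j))"
    unfolding F2_def by (simp add: field_simps)
  also have "\<dots> \<le> p * (1 - p) ^ (j + w) / 2 * log 2 (1 + \<gamma> * cmb t x y j)"
    unfolding e by (rule mult_left_mono[OF log2_concave[OF a assms(3,4)] c])
  also have "\<dots> = F2 (cmb t x y) j" by (simp add: F2_def)
  finally show ?thesis .
qed

lemma F3_cmb:
  assumes "admissible B x" "admissible B y" "0 \<le> t" "t \<le> 1"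
  shows "(1 - t) * F3 x k + t * F3 y k \<le> F3 (cmb t x y) k"
proof -
  have a: "0 < 1 + \<gamma> * Rs x k / real w" "0 < 1 + \<gamma> * Rs y k / real w"
    using adm_facts(3)[OF assms(1)] adm_facts(3)[OF assms(2)] g0
    by (auto intro: add_pos_nonneg)
  have e: "1 + \<gamma> * Rs (cmb t x y) k / real w = (1 - t) * (1 + \<gamma> * Rs x k / real w) + t * (1 + \<gamma> * Rs y k / real w)"
  proof -
    have wpos: "real w > 0" using w1 by simp
    show ?thesis unfolding Rs_cmb using wpos by (simp add: field_simps)
  qed
  have c: "0 \<le> p^2 * (1 - p) ^ (k + w) * (real w / 2)" using p0 p1 by simp
  have "(1 - t) * F3 x k + t * F3 y k = p^2 * (1 - p) ^ (k + w) * (real w / 2) * ((1 - t) * log 2 (1 + \<gamma> * Rs x k / real w) + t * log 2 (1 + \<gamma> * Rs y k / real w))"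
    unfolding F3_def by (simp add: field_simps)
  also have "\<dots> \<le> p^2 * (1 - p) ^ (k + w) * (real w / 2) * log 2 (1 + \<gamma> * Rs (cmb t x y) k / real w)"
    unfolding e by (rule mult_left_mono[OF log2_concave[OF a assms(3,4)] c])
  also have "\<dots> = F3 (cmb t x y) k" by (simp add: F3_def)
  finally show ?thesis .
qed

lemma T_comb:
  assumes x: "admissible B x" and y: "admissible B y"
  shows "(1 - t) * T x + t * T y = C0 + (\<Sum>j. (1 - t) * F2 x j + t * F2 y j) + (\<Sum>k. (1 - t) * F3 x k + t * F3 y k)"
proof -
  have sc: "(1 - t) * suminf f + t * suminf g = (\<Sum>j. (1 - t) * f j + t * g j)"
    if "summable f" "summable g" for f g :: "nat \<Rightarrow> real"
  proof -
    have 1: "summable (\<lambda>j. (1 - t) * f j)" using that(1) by (rule summable_mult)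
    have 2: "summable (\<lambda>j. t * g j)" using that(2) by (rule summable_mult)
    have "(\<Sum>j. (1 - t) * f j + t * g j) = (\<Sum>j. (1 - t) * f j) + (\<Sum>j. t * g j)"
      using suminf_add[OF 1 2] by simp
    also have "\<dots> = (1 - t) * suminf f + t * suminf g"
      using suminf_mult[OF that(1)] suminf_mult[OF that(2)] by simp
    finally show ?thesis by simp
  qed
  have "(1 - t) * T x + t * T y = C0 + ((1 - t) * suminf (F2 x) + t * suminf (F2 y)) + ((1 - t) * suminf (F3 x) + t * suminf (F3 y))"
    unfolding T_eq by (simp add: algebra_simps)
  also have "\<dots> = C0 + (\<Sum>j. (1 - t) * F2 x j + t * F2 y j) + (\<Sum>k. (1 - t) * F3 x k + t * F3 y k)"
    using x y by (simp add: sc summable_F2 summable_F3)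
  finally show "(1 - t) * T x + t * T y = C0 + (\<Sum>j. (1 - t) * F2 x j + t * F2 y j) + (\<Sum>k. (1 - t) * F3 x k + t * F3 y k)" .
qed

lemma T_concave:
  assumes x: "admissible B x" and y: "admissible B y" and t: "0 \<le> t" "t \<le> 1"
  shows "(1 - t) * T x + t * T y \<le> T (cmb t x y)"
proof -
  have z: "admissible B (cmb t x y)" by (rule adm_cmb[OF x y t])
  have "(1 - t) * T x + t * T y = C0 + (\<Sum>j. (1 - t) * F2 x j + t * F2 y j) + (\<Sum>k. (1 - t) * F3 x k + t * F3 y k)"
    by (rule T_comb[OF x y])
  also have "\<dots> \<le> C0 + suminf (F2 (cmb t x y)) + suminf (F3 (cmb t x y))"
    using x y z
    by (intro add_mono order_refl suminf_le F2_cmb[OF x y t] F3_cmb[OF x y t])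
       (simp_all add: summable_add summable_mult summable_F2 summable_F3)
  finally show ?thesis unfolding T_eq .
qed

lemma T_strict:
  assumes x: "admissible B x" and y: "admissible B y" and ne: "x \<noteq> y"
  shows "(T x + T y) / 2 < T (cmb (1/2) x y)"
proof -
  let ?z = "cmb (1/2) x y"
  have z: "admissible B ?z" by (rule adm_cmb[OF x y]) auto
  obtain j where j: "x j \<noteq> y j" using ne by auto
  have d2: "0 \<le> F2 ?z n - ((1 - 1/2) * F2 x n + 1/2 * F2 y n)" for n
    using F2_cmb[OF x y, of "1/2" n] by simp
  have d3: "0 \<le> F3 ?z n - ((1 - 1/2) * F3 x n + 1/2 * F3 y n)" for n
    using F3_cmb[OF x y, of "1/2" n] by simp
  have strict: "0 < F2 ?z j - ((1 - 1/2) * F2 x j + 1/2 * F2 y j)"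
  proof -
    have a: "0 < 1 + \<gamma> * x j" "0 < 1 + \<gamma> * y j"
      using adm_facts(1)[OF x] adm_facts(1)[OF y] g0 by (auto intro: add_pos_nonneg)
    have ne': "1 + \<gamma> * x j \<noteq> 1 + \<gamma> * y j" using j g0 by simp
    have e: "1 + \<gamma> * ?z j = ((1 + \<gamma> * x j) + (1 + \<gamma> * y j)) / 2"
      by (simp add: cmb_def algebra_simps)
    have c: "0 < p * (1 - p) ^ (j + w) / 2" using p0 p1 by simp
    have "(1 - 1/2) * F2 x j + 1/2 * F2 y j = p * (1 - p) ^ (j + w) / 2 * ((log 2 (1 + \<gamma> * x j) + log 2 (1 + \<gamma> * y j)) / 2)"
      by (simp add: F2_def algebra_simps)
    also have "\<dots> < p * (1 - p) ^ (j + w) / 2 * log 2 (1 + \<gamma> * ?z j)"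
      unfolding e using log2_concave_strict[OF a ne'] c by (rule mult_strict_left_mono)
    also have "\<dots> = F2 ?z j" by (simp add: F2_def)
    finally show ?thesis by simp
  qed
  have s2: "summable (\<lambda>n. F2 ?z n - ((1 - 1/2) * F2 x n + 1/2 * F2 y n))"
    using x y z by (intro summable_diff summable_add summable_mult summable_F2)
  have s3: "summable (\<lambda>n. F3 ?z n - ((1 - 1/2) * F3 x n + 1/2 * F3 y n))"
    using x y z by (intro summable_diff summable_add summable_mult summable_F3)
  have pos: "0 < (\<Sum>n. F2 ?z n - ((1 - 1/2) * F2 x n + 1/2 * F2 y n))"
    by (rule suminf_pos2[OF s2 d2 strict])
  have nn: "0 \<le> (\<Sum>n. F3 ?z n - ((1 - 1/2) * F3 x n + 1/2 * F3 y n))"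
    by (rule suminf_nonneg[OF s3 d3])
  have c: "(1 - 1/2) * T x + 1/2 * T y = C0 + (\<Sum>j. (1 - 1/2) * F2 x j + 1/2 * F2 y j) + (\<Sum>k. (1 - 1/2) * F3 x k + 1/2 * F3 y k)"
    by (rule T_comb[OF x y])
  have sa2: "summable (\<lambda>j. (1 - 1/2) * F2 x j + 1/2 * F2 y j)"
    using x y by (intro summable_add summable_mult summable_F2)
  have sa3: "summable (\<lambda>j. (1 - 1/2) * F3 x j + 1/2 * F3 y j)"
    using x y by (intro summable_add summable_mult summable_F3)
  have "T ?z - (T x + T y) / 2 = (suminf (F2 ?z) - (\<Sum>j. (1 - 1/2) * F2 x j + 1/2 * F2 y j))
      + (suminf (F3 ?z) - (\<Sum>k. (1 - 1/2) * F3 x k + 1/2 * F3 y k))"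
    using c unfolding T_eq[of ?z] by (simp add: field_simps)
  also have "\<dots> = (\<Sum>n. F2 ?z n - ((1 - 1/2) * F2 x n + 1/2 * F2 y n))
      + (\<Sum>n. F3 ?z n - ((1 - 1/2) * F3 x n + 1/2 * F3 y n))"
    using z sa2 sa3 by (simp add: suminf_diff summable_F2 summable_F3)
  finally have "T ?z - (T x + T y) / 2 = (\<Sum>n. F2 ?z n - ((1 - 1/2) * F2 x n + 1/2 * F2 y n))
      + (\<Sum>n. F3 ?z n - ((1 - 1/2) * F3 x n + 1/2 * F3 y n))" .
  then show ?thesis using pos nn by linarith
qed

end

lemma log2_tangent:
  fixes a b :: real
  assumes "0 < a" "0 < b"
  shows "log 2 b - log 2 a \<le> (b - a) / a / ln 2"
proof -
  have "ln b - ln a \<le> (b - a) / a" using ln_tangent[OF assms] by simp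
  then have "(ln b - ln a) / ln 2 \<le> (b - a) / a / ln 2" by (intro divide_right_mono) auto
  then show ?thesis by (simp add: log_def diff_divide_distrib)
qed

context params begin

definition gg :: "(nat \<Rightarrow> real) \<Rightarrow> nat \<Rightarrow> real" where
  "gg x k = 1 / (1 + \<gamma> * Rs x k / real w)"
definition hh :: "(nat \<Rightarrow> real) \<Rightarrow> nat \<Rightarrow> real" where
  "hh x k = (1 - p) ^ k * gg x k"
definition tl :: "(nat \<Rightarrow> real) \<Rightarrow> nat \<Rightarrow> real" where
  "tl x m = (\<Sum>k. hh x (k + m))"
definition aa :: "(nat \<Rightarrow> real) \<Rightarrow> nat \<Rightarrow> real" where
  "aa x j = 1 / (1 + \<gamma> * x j)"
definition DD :: "(nat \<Rightarrow> real) \<Rightarrow> nat \<Rightarrow> real" where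
  "DD x m = (1 - p) ^ m * aa x m - p * tl x m"
definition recur :: "(nat \<Rightarrow> real) \<Rightarrow> bool" where
  "recur x \<longleftrightarrow> (\<forall>j. (1 - p) / (1 + \<gamma> * x (Suc j))
      = 1 / (1 + \<gamma> * x j) - p / (1 + (\<gamma> / real w) * (B - (\<Sum>i\<le>j. x i))))"

lemma wpos: "0 < real w" using w1 by simp

lemma gg_bounds: "admissible B x \<Longrightarrow> 0 < gg x k \<and> gg x k \<le> 1"
proof -
  assume x: "admissible B x"
  have "0 \<le> \<gamma> * Rs x k / real w" using adm_facts(3)[OF x] g0 wpos by simp
  then show ?thesis by (simp add: gg_def)
qed

lemma aa_bounds: "admissible B x \<Longrightarrow> 0 < aa x j \<and> aa x j \<le> 1"
proof -
  assume x: "admissible B x"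
  have "0 \<le> \<gamma> * x j" using adm_facts(1)[OF x] g0 by simp
  then show ?thesis by (simp add: aa_def)
qed

lemma hh_bound: "admissible B x \<Longrightarrow> 0 < hh x k \<and> hh x k \<le> (1 - p) ^ k"
  using gg_bounds[of x k] p0 p1 by (auto simp: hh_def mult_le_cancel_left1)

lemma summable_hh_shift: "admissible B x \<Longrightarrow> summable (\<lambda>k. hh x (k + m))"
proof -
  assume x: "admissible B x"
  show ?thesis
  proof (rule summable_geo_bound[of _ "(1 - p) ^ m"])
    fix k
    have "\<bar>hh x (k + m)\<bar> \<le> (1 - p) ^ (k + m)" using hh_bound[OF x, of "k + m"] by simp
    then show "\<bar>hh x (k + m)\<bar> \<le> (1 - p) ^ m * (1 - p) ^ k" by (simp add: power_add mult.commute)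
  qed
qed

lemma tl_Suc: "admissible B x \<Longrightarrow> tl x m = hh x m + tl x (Suc m)"
proof -
  assume x: "admissible B x"
  have "(\<Sum>k. hh x (Suc k + m)) = (\<Sum>k. hh x (k + m)) - hh x (0 + m)"
    using suminf_split_head[OF summable_hh_shift[OF x, of m]] by simp
  then show ?thesis unfolding tl_def by simp
qed

lemma geo_sum: "(\<Sum>k. (1 - p) ^ (k + m)) = (1 - p) ^ m / p"
proof -
  have "(\<Sum>k. (1 - p) ^ (k + m)) = (\<Sum>k. (1 - p) ^ k * (1 - p) ^ m)" by (simp add: power_add)
  also have "\<dots> = (\<Sum>k. (1 - p) ^ k) * (1 - p) ^ m"
    using p0 p1 by (intro suminf_mult2[symmetric] summable_geometric) auto
  also have "(\<Sum>k. (1 - p) ^ k) = 1 / p" using p0 p1 by (subst suminf_geometric) auto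
  finally show ?thesis by simp
qed

lemma summable_geo_shift: "summable (\<lambda>k. (1 - p) ^ (k + m))"
  using p0 p1 by (simp add: power_add summable_geometric summable_mult2)

lemma tl_bounds: "admissible B x \<Longrightarrow> 0 \<le> tl x m \<and> tl x m \<le> (1 - p) ^ m / p"
proof -
  assume x: "admissible B x"
  have "tl x m \<le> (\<Sum>k. (1 - p) ^ (k + m))"
    unfolding tl_def using hh_bound[OF x]
    by (intro suminf_le summable_hh_shift[OF x] summable_geo_shift) auto
  moreover have "0 \<le> tl x m" unfolding tl_def using hh_bound[OF x]
    by (intro suminf_nonneg summable_hh_shift[OF x]) (auto intro: less_imp_le)
  ultimately show ?thesis by (simp add: geo_sum)
qed

lemma pow_lim: "(\<lambda>m. (1 - p) ^ m) \<longlonglongrightarrow> 0"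
  using p0 p1 by (intro LIMSEQ_power_zero) auto

lemma tl_lim: "admissible B x \<Longrightarrow> tl x \<longlonglongrightarrow> 0"
proof -
  assume x: "admissible B x"
  show ?thesis
  proof (rule Lim_null_comparison)
    show "\<forall>\<^sub>F m in sequentially. norm (tl x m) \<le> (1 - p) ^ m / p"
      using tl_bounds[OF x] by auto
    show "(\<lambda>m. (1 - p) ^ m / p) \<longlonglongrightarrow> 0" using pow_lim by (intro tendsto_divide_zero)
  qed
qed

lemma gg_eq: "p / (1 + (\<gamma> / real w) * (B - (\<Sum>i\<le>j. x i))) = p * gg x j"
  by (simp add: gg_def Rs_def)

lemma recur_step: "recur x \<Longrightarrow> (1 - p) * aa x (Suc j) = aa x j - p * gg x j"
  unfolding recur_def aa_def gg_eq[symmetric] by simp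

lemma DD_const: "admissible B x \<Longrightarrow> recur x \<Longrightarrow> DD x (Suc m) = DD x m"
proof -
  assume x: "admissible B x" and r: "recur x"
  have "(1 - p) ^ Suc m * aa x (Suc m) = (1 - p) ^ m * ((1 - p) * aa x (Suc m))" by simp
  also have "\<dots> = (1 - p) ^ m * (aa x m - p * gg x m)" using recur_step[OF r, of m] by simp
  also have "\<dots> = (1 - p) ^ m * aa x m - p * hh x m" by (simp add: hh_def algebra_simps)
  finally have "(1 - p) ^ Suc m * aa x (Suc m) = (1 - p) ^ m * aa x m - p * hh x m" .
  then show ?thesis using tl_Suc[OF x, of m] by (simp add: DD_def algebra_simps)
qed

lemma DD_zero: "admissible B x \<Longrightarrow> recur x \<Longrightarrow> DD x m = 0"
proof -
  assume x: "admissible B x" and r: "recur x"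
  have c: "DD x m = DD x 0" for m by (induction m) (simp_all add: DD_const[OF x r])
  have "DD x \<longlonglongrightarrow> 0"
  proof -
    have 1: "(\<lambda>m. (1 - p) ^ m * aa x m) \<longlonglongrightarrow> 0"
    proof (rule Lim_null_comparison)
      have "norm ((1 - p) ^ m * aa x m) \<le> (1 - p) ^ m" for m
      proof -
        have "norm ((1 - p) ^ m * aa x m) = (1 - p) ^ m * aa x m"
          using aa_bounds[OF x, of m] p1 by (simp add: abs_mult)
        also have "\<dots> \<le> (1 - p) ^ m * 1" using aa_bounds[OF x, of m] p1 by (intro mult_left_mono) auto
        finally show ?thesis by simp
      qed
      then show "\<forall>\<^sub>F m in sequentially. norm ((1 - p) ^ m * aa x m) \<le> (1 - p) ^ m"
        by (intro always_eventually allI)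
    qed (rule pow_lim)
    have 2: "(\<lambda>m. p * tl x m) \<longlonglongrightarrow> 0" using tendsto_mult_right_zero[OF tl_lim[OF x]] by simp
    show ?thesis unfolding DD_def[abs_def] using tendsto_diff[OF 1 2] by simp
  qed
  moreover have "DD x = (\<lambda>m. DD x 0)" using c by (rule ext)
  ultimately have "(\<lambda>m. DD x 0) \<longlonglongrightarrow> 0" by simp
  then have "DD x 0 = 0" by (simp add: LIMSEQ_const_iff)
  then show ?thesis using c by simp
qed

lemma psum_bounds: "admissible B x \<Longrightarrow> 0 \<le> (\<Sum>i<N. x i) \<and> (\<Sum>i<N. x i) \<le> B"
proof -
  assume x: "admissible B x"
  have nn: "\<forall>j. 0 \<le> x j" and s: "summable x" and le: "suminf x \<le> B"
    using x unfolding admissible_def by auto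
  have "(\<Sum>i<N. x i) \<le> suminf x" by (rule sum_le_suminf[OF s]) (use nn in auto)
  then show ?thesis using nn le by (simp add: sum_nonneg)
qed

lemma abel:
  assumes x: "admissible B x" and y: "admissible B y"
  shows "(\<Sum>j. (y j - x j) * tl x j) = (\<Sum>k. hh x k * (\<Sum>i\<le>k. y i - x i))"
proof -
  define d where "d i = y i - x i" for i
  have dB: "\<bar>d i\<bar> \<le> B" for i using adm_facts(1,2)[OF x, of i] adm_facts(1,2)[OF y, of i] by (simp add: d_def)
  have DB: "\<bar>\<Sum>i<N. d i\<bar> \<le> B" for N
  proof -
    have "(\<Sum>i<N. d i) = (\<Sum>i<N. y i) - (\<Sum>i<N. x i)" by (simp add: d_def sum_subtractf)
    then show ?thesis using psum_bounds[OF x, of N] psum_bounds[OF y, of N] by (simp only: abs_le_iff) linarith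
  qed
  have DB': "\<bar>\<Sum>i\<le>k. d i\<bar> \<le> B" for k using DB[of "Suc k"] by (simp add: lessThan_Suc_atMost)
  have partial: "(\<Sum>k<N. hh x k * (\<Sum>i\<le>k. d i)) = (\<Sum>i<N. d i * (tl x i - tl x N))" for N
  proof (induction N)
    case 0 then show ?case by simp
  next
    case (Suc N)
    have h: "tl x N - tl x (Suc N) = hh x N" using tl_Suc[OF x, of N] by simp
    have "(\<Sum>i<Suc N. d i * (tl x i - tl x (Suc N))) = (\<Sum>i<Suc N. d i * (tl x i - tl x N) + d i * hh x N)"
      by (intro sum.cong refl) (simp add: algebra_simps flip: h)
    also have "\<dots> = (\<Sum>i<N. d i * (tl x i - tl x N)) + (\<Sum>i<Suc N. d i) * hh x N"
      by (simp add: sum.distrib sum_distrib_right distrib_right)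
    also have "\<dots> = (\<Sum>k<N. hh x k * (\<Sum>i\<le>k. d i)) + hh x N * (\<Sum>i\<le>N. d i)"
      using Suc.IH by (simp only: lessThan_Suc_atMost mult.commute)
    also have "\<dots> = (\<Sum>k<Suc N. hh x k * (\<Sum>i\<le>k. d i))" by simp
    finally show ?case by simp
  qed
  have s1: "summable (\<lambda>k. hh x k * (\<Sum>i\<le>k. d i))"
  proof (rule summable_geo_bound[of _ B])
    fix k
    have "\<bar>hh x k * (\<Sum>i\<le>k. d i)\<bar> \<le> (1 - p) ^ k * B"
      using hh_bound[OF x, of k] DB'[of k] by (simp add: abs_mult mult_mono)
    then show "\<bar>hh x k * (\<Sum>i\<le>k. d i)\<bar> \<le> B * (1 - p) ^ k" by (simp add: mult.commute)
  qed
  have s2: "summable (\<lambda>j. d j * tl x j)"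
  proof (rule summable_geo_bound[of _ "B / p"])
    fix j
    have "\<bar>d j * tl x j\<bar> = \<bar>d j\<bar> * tl x j" using tl_bounds[OF x, of j] by (simp add: abs_mult)
    also have "\<dots> \<le> B * ((1 - p) ^ j / p)"
      using tl_bounds[OF x, of j] dB[of j] Bpos by (intro mult_mono) auto
    finally have "\<bar>d j * tl x j\<bar> \<le> B * ((1 - p) ^ j / p)" .
    then show "\<bar>d j * tl x j\<bar> \<le> B / p * (1 - p) ^ j" by simp
  qed
  have L1: "(\<lambda>N. \<Sum>k<N. hh x k * (\<Sum>i\<le>k. d i)) \<longlonglongrightarrow> (\<Sum>k. hh x k * (\<Sum>i\<le>k. d i))"
    using s1 by (rule summable_LIMSEQ)
  have L2: "(\<lambda>N. \<Sum>i<N. d i * (tl x i - tl x N)) \<longlonglongrightarrow> (\<Sum>j. d j * tl x j)"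
  proof -
    have e: "(\<Sum>i<N. d i * (tl x i - tl x N)) = (\<Sum>i<N. d i * tl x i) - tl x N * (\<Sum>i<N. d i)" for N
      by (simp add: right_diff_distrib sum_subtractf sum_distrib_right mult.commute)
    have a: "(\<lambda>N. \<Sum>i<N. d i * tl x i) \<longlonglongrightarrow> (\<Sum>j. d j * tl x j)" using s2 by (rule summable_LIMSEQ)
    have b: "(\<lambda>N. tl x N * (\<Sum>i<N. d i)) \<longlonglongrightarrow> 0"
    proof (rule Lim_null_comparison)
      have bnd: "norm (tl x N * (\<Sum>i<N. d i)) \<le> tl x N * B" for N
      proof -
        have "norm (tl x N * (\<Sum>i<N. d i)) = tl x N * \<bar>\<Sum>i<N. d i\<bar>"
          using tl_bounds[OF x, of N] by (simp add: abs_mult)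
        also have "\<dots> \<le> tl x N * B" using tl_bounds[OF x, of N] DB[of N] by (intro mult_left_mono) auto
        finally show ?thesis .
      qed
      show "\<forall>\<^sub>F N in sequentially. norm (tl x N * (\<Sum>i<N. d i)) \<le> tl x N * B"
        using bnd by (simp add: always_eventually)
      show "(\<lambda>N. tl x N * B) \<longlonglongrightarrow> 0" using tendsto_mult_left_zero[OF tl_lim[OF x]] by simp
    qed
    show ?thesis unfolding e using tendsto_diff[OF a b] by simp
  qed
  have "(\<Sum>k. hh x k * (\<Sum>i\<le>k. d i)) = (\<Sum>j. d j * tl x j)"
  proof -
    have "(\<lambda>N. \<Sum>k<N. hh x k * (\<Sum>i\<le>k. d i)) = (\<lambda>N. \<Sum>i<N. d i * (tl x i - tl x N))"
      using partial by (rule ext)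
    then have L1': "(\<lambda>N. \<Sum>i<N. d i * (tl x i - tl x N)) \<longlonglongrightarrow> (\<Sum>k. hh x k * (\<Sum>i\<le>k. d i))"
      using L1 by simp
    show ?thesis by (rule LIMSEQ_unique[OF L1' L2])
  qed
  then show ?thesis by (simp add: d_def)
qed

end

context params begin

definition cc :: real where "cc = p * (1 - p) ^ w * \<gamma> / (2 * ln 2)"

lemma cc_pos: "0 < cc" using p0 p1 g0 by (simp add: cc_def)

lemma F2_tan:
  assumes x: "admissible B x" and y: "admissible B y"
  shows "F2 y j - F2 x j \<le> cc * ((1 - p) ^ j * (y j - x j) * aa x j)"
proof -
  have a: "0 < 1 + \<gamma> * x j" and b: "0 < 1 + \<gamma> * y j"
    using adm_facts(1)[OF x, of j] adm_facts(1)[OF y, of j] g0 by (auto intro: add_pos_nonneg)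
  have t: "log 2 (1 + \<gamma> * y j) - log 2 (1 + \<gamma> * x j) \<le> \<gamma> * (y j - x j) * aa x j / ln 2"
  proof -
    have e1: "1 + \<gamma> * y j - (1 + \<gamma> * x j) = \<gamma> * (y j - x j)" by (simp add: algebra_simps)
    have e2: "\<gamma> * (y j - x j) / (1 + \<gamma> * x j) = \<gamma> * (y j - x j) * aa x j" by (simp add: aa_def)
    show ?thesis using log2_tangent[OF a b] unfolding e1 e2 by simp
  qed
  have c: "0 \<le> p * (1 - p) ^ (j + w) / 2" using p0 p1 by simp
  have "F2 y j - F2 x j = p * (1 - p) ^ (j + w) / 2 * (log 2 (1 + \<gamma> * y j) - log 2 (1 + \<gamma> * x j))"
    unfolding F2_def by (simp add: algebra_simps)
  also have "\<dots> \<le> p * (1 - p) ^ (j + w) / 2 * (\<gamma> * (y j - x j) * aa x j / ln 2)"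
    by (rule mult_left_mono[OF t c])
  also have "\<dots> = cc * ((1 - p) ^ j * (y j - x j) * aa x j)"
    unfolding cc_def by (simp add: power_add field_simps)
  finally show ?thesis .
qed

lemma F3_tan:
  assumes x: "admissible B x" and y: "admissible B y"
  shows "F3 y k - F3 x k \<le> cc * (p * (1 - p) ^ k * (Rs y k - Rs x k) * gg x k)"
proof -
  have a: "0 < 1 + \<gamma> * Rs x k / real w" and b: "0 < 1 + \<gamma> * Rs y k / real w"
    using adm_facts(3)[OF x, of k] adm_facts(3)[OF y, of k] g0 wpos by (auto intro: add_pos_nonneg)
  have t: "log 2 (1 + \<gamma> * Rs y k / real w) - log 2 (1 + \<gamma> * Rs x k / real w) \<le> \<gamma> * (Rs y k - Rs x k) / real w * gg x k / ln 2"
  proof -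
    have e1: "1 + \<gamma> * Rs y k / real w - (1 + \<gamma> * Rs x k / real w) = \<gamma> * (Rs y k - Rs x k) / real w"
      by (simp add: algebra_simps diff_divide_distrib)
    have e2: "\<gamma> * (Rs y k - Rs x k) / real w / (1 + \<gamma> * Rs x k / real w) = \<gamma> * (Rs y k - Rs x k) / real w * gg x k"
      by (simp add: gg_def)
    show ?thesis using log2_tangent[OF a b] unfolding e1 e2 by simp
  qed
  have c: "0 \<le> p^2 * (1 - p) ^ (k + w) * (real w / 2)" using p0 p1 by simp
  have "F3 y k - F3 x k = p^2 * (1 - p) ^ (k + w) * (real w / 2) * (log 2 (1 + \<gamma> * Rs y k / real w) - log 2 (1 + \<gamma> * Rs x k / real w))"
    unfolding F3_def by (simp add: algebra_simps)
  also have "\<dots> \<le> p^2 * (1 - p) ^ (k + w) * (real w / 2) * (\<gamma> * (Rs y k - Rs x k) / real w * gg x k / ln 2)"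
    by (rule mult_left_mono[OF t c])
  also have "\<dots> = cc * (p * (1 - p) ^ k * (Rs y k - Rs x k) * gg x k)"
    unfolding cc_def using wpos by (simp add: power_add power2_eq_square field_simps)
  finally show ?thesis .
qed

lemma T_max_of_DD:
  assumes x: "admissible B x" and D: "\<forall>m. DD x m = 0" and y: "admissible B y"
  shows "T y \<le> T x"
proof -
  define u where "u j = (1 - p) ^ j * (y j - x j) * aa x j" for j
  define v where "v k = p * (1 - p) ^ k * (Rs y k - Rs x k) * gg x k" for k
  have su: "summable u"
  proof (rule summable_geo_bound[of _ B])
    fix j
    have "\<bar>y j - x j\<bar> \<le> B" using adm_facts(1,2)[OF x, of j] adm_facts(1,2)[OF y, of j] by linarith
    moreover have "\<bar>aa x j\<bar> \<le> 1" using aa_bounds[OF x, of j] by simp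
    ultimately have "\<bar>y j - x j\<bar> * \<bar>aa x j\<bar> \<le> B * 1" by (intro mult_mono) auto
    then show "\<bar>u j\<bar> \<le> B * (1 - p) ^ j" using p1 by (simp add: u_def abs_mult mult_ac mult_left_mono)
  qed
  have sv: "summable v"
  proof (rule summable_geo_bound[of _ "p * B"])
    fix k
    have "\<bar>Rs y k - Rs x k\<bar> \<le> B" using adm_facts(3,4)[OF x, of k] adm_facts(3,4)[OF y, of k] by linarith
    moreover have "\<bar>gg x k\<bar> \<le> 1" using gg_bounds[OF x, of k] by simp
    ultimately have "\<bar>Rs y k - Rs x k\<bar> * \<bar>gg x k\<bar> \<le> B * 1" by (intro mult_mono) auto
    then have "p * (1 - p) ^ k * (\<bar>Rs y k - Rs x k\<bar> * \<bar>gg x k\<bar>) \<le> p * (1 - p) ^ k * B"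
      using p0 p1 by (intro mult_left_mono) auto
    then show "\<bar>v k\<bar> \<le> p * B * (1 - p) ^ k" using p0 p1 by (simp add: v_def abs_mult mult_ac)
  qed
  have "T y - T x = (\<Sum>j. F2 y j - F2 x j) + (\<Sum>k. F3 y k - F3 x k)" by (rule T_diff[OF x y])
  also have "\<dots> \<le> (\<Sum>j. cc * u j) + (\<Sum>k. cc * v k)"
  proof (rule add_mono)
    show "(\<Sum>j. F2 y j - F2 x j) \<le> (\<Sum>j. cc * u j)"
      using F2_tan[OF x y] su x y unfolding u_def
      by (intro suminf_le summable_diff summable_F2 summable_mult) auto
    show "(\<Sum>k. F3 y k - F3 x k) \<le> (\<Sum>k. cc * v k)"
      using F3_tan[OF x y] sv x y unfolding v_def
      by (intro suminf_le summable_diff summable_F3 summable_mult) auto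
  qed
  also have "\<dots> = cc * (suminf u + suminf v)"
    using su sv by (simp add: suminf_mult distrib_left)
  also have "suminf u + suminf v = 0"
  proof -
    have ue: "u j = p * ((y j - x j) * tl x j)" for j
    proof -
      have "(1 - p) ^ j * aa x j = p * tl x j" using D unfolding DD_def by (metis eq_iff_diff_eq_0)
      then show "u j = p * ((y j - x j) * tl x j)" unfolding u_def by (metis mult.assoc mult.commute)
    qed
    have "suminf u = (\<Sum>j. p * ((y j - x j) * tl x j))" by (rule suminf_cong) (rule ue)
    also have "\<dots> = p * (\<Sum>j. (y j - x j) * tl x j)"
    proof (rule suminf_mult)
      have "(\<lambda>j. (y j - x j) * tl x j) = (\<lambda>j. (1 / p) * u j)" using ue p0 by (simp add: fun_eq_iff)
      then show "summable (\<lambda>j. (y j - x j) * tl x j)" using su by (simp add: summable_mult)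
    qed
    finally have U: "suminf u = p * (\<Sum>j. (y j - x j) * tl x j)" .
    have "suminf v = (\<Sum>k. - p * (hh x k * (\<Sum>i\<le>k. y i - x i)))"
    proof (rule suminf_cong)
      fix k
      have "Rs y k - Rs x k = - (\<Sum>i\<le>k. y i - x i)" by (simp add: Rs_def sum_subtractf)
      then show "v k = - p * (hh x k * (\<Sum>i\<le>k. y i - x i))" unfolding v_def hh_def by simp
    qed
    also have "\<dots> = - p * (\<Sum>k. hh x k * (\<Sum>i\<le>k. y i - x i))"
    proof (rule suminf_mult)
      have "summable (\<lambda>k. - p * (hh x k * (\<Sum>i\<le>k. y i - x i)))"
      proof -
        have "(\<lambda>k. - p * (hh x k * (\<Sum>i\<le>k. y i - x i))) = v"
        proof
          fix k
          have "Rs y k - Rs x k = - (\<Sum>i\<le>k. y i - x i)" by (simp add: Rs_def sum_subtractf)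
          then show "- p * (hh x k * (\<Sum>i\<le>k. y i - x i)) = v k" unfolding v_def hh_def by simp
        qed
        then show ?thesis using sv by simp
      qed
      then have "summable (\<lambda>k. (- 1 / p) * (- p * (hh x k * (\<Sum>i\<le>k. y i - x i))))" by (rule summable_mult)
      then show "summable (\<lambda>k. hh x k * (\<Sum>i\<le>k. y i - x i))" using p0 by simp
    qed
    finally have V: "suminf v = - p * (\<Sum>k. hh x k * (\<Sum>i\<le>k. y i - x i))" .
    show ?thesis unfolding U V abel[OF x y] by simp
  qed
  finally show ?thesis by simp
qed

end

context params begin

definition xp :: "nat \<Rightarrow> real \<Rightarrow> (nat \<Rightarrow> real) \<Rightarrow> nat \<Rightarrow> real" where
  "xp j e x i = (if i = j then x i + e else if i = Suc j then x i - e else x i)"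

definition dp :: "nat \<Rightarrow> real \<Rightarrow> nat \<Rightarrow> real" where
  "dp j e i = (if i = j then e else if i = Suc j then - e else 0)"

lemma xp_dp: "xp j e x = (\<lambda>i. x i + dp j e i)"
  by (auto simp: xp_def dp_def fun_eq_iff)

lemma dp_sums: "dp j e sums 0"
proof -
  have "dp j e sums (\<Sum>n\<in>{j, Suc j}. dp j e n)"
    by (rule sums_finite) (auto simp: dp_def)
  then show ?thesis by (simp add: dp_def)
qed

lemma dp_psum: "(\<Sum>i\<le>k. dp j e i) = (if k = j then e else 0)"
  by (induction k) (auto simp: dp_def)

lemma adm_xp:
  assumes x: "admissible B x" and a: "0 \<le> x j + e" and b: "0 \<le> x (Suc j) - e"
  shows "admissible B (xp j e x)"
proof -
  have s: "summable x" "suminf x \<le> B" "\<forall>i. 0 \<le> x i" using x by (auto simp: admissible_def)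
  have "(\<lambda>i. x i + dp j e i) sums (suminf x + 0)"
    using summable_sums[OF s(1)] dp_sums by (rule sums_add)
  then have "summable (xp j e x) \<and> suminf (xp j e x) = suminf x"
    unfolding xp_dp by (simp add: sums_iff)
  moreover have "\<forall>i. 0 \<le> xp j e x i" using s(3) a b by (auto simp: xp_def)
  ultimately show ?thesis using s by (simp add: admissible_def)
qed

lemma Rs_xp: "Rs (xp j e x) k = Rs x k - (if k = j then e else 0)"
  unfolding Rs_def xp_dp by (simp add: sum.distrib dp_psum)

definition Phi :: "(nat \<Rightarrow> real) \<Rightarrow> nat \<Rightarrow> real \<Rightarrow> real" where
  "Phi x j e = p * (1 - p) ^ (j + w) / 2 * (log 2 (1 + \<gamma> * (x j + e)) - log 2 (1 + \<gamma> * x j))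
    + p * (1 - p) ^ (Suc j + w) / 2 * (log 2 (1 + \<gamma> * (x (Suc j) - e)) - log 2 (1 + \<gamma> * x (Suc j)))
    + p^2 * (1 - p) ^ (j + w) * (real w / 2) * (log 2 (1 + \<gamma> * (Rs x j - e) / real w) - log 2 (1 + \<gamma> * Rs x j / real w))"

lemma T_xp:
  assumes x: "admissible B x" and a: "0 \<le> x j + e" and b: "0 \<le> x (Suc j) - e"
  shows "T (xp j e x) - T x = Phi x j e"
proof -
  have x': "admissible B (xp j e x)" by (rule adm_xp[OF x a b])
  have 2: "(\<Sum>n. F2 (xp j e x) n - F2 x n) = (\<Sum>n\<in>{j, Suc j}. F2 (xp j e x) n - F2 x n)"
    by (rule suminf_finite) (auto simp: F2_def xp_def)
  have 3: "(\<Sum>n. F3 (xp j e x) n - F3 x n) = (\<Sum>n\<in>{j}. F3 (xp j e x) n - F3 x n)"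
    by (rule suminf_finite) (auto simp: F3_def Rs_xp)
  show ?thesis unfolding T_diff[OF x x'] 2 3
    by (simp add: F2_def F3_def Rs_xp Phi_def xp_def algebra_simps)
qed

lemma Phi0: "Phi x j 0 = 0" by (simp add: Phi_def)

definition Dphi :: "(nat \<Rightarrow> real) \<Rightarrow> nat \<Rightarrow> real" where
  "Dphi x j = cc * (1 - p) ^ j * (aa x j - (1 - p) * aa x (Suc j) - p * gg x j)"

lemma dlog_plus: "0 < 1 + \<gamma> * a \<Longrightarrow> ((\<lambda>e. log 2 (1 + \<gamma> * (a + e))) has_real_derivative \<gamma> / (ln 2 * (1 + \<gamma> * a))) (at 0)"
  by (auto intro!: derivative_eq_intros simp: field_simps)

lemma dlog_minus: "0 < 1 + \<gamma> * a \<Longrightarrow> ((\<lambda>e. log 2 (1 + \<gamma> * (a - e))) has_real_derivative - \<gamma> / (ln 2 * (1 + \<gamma> * a))) (at 0)"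
  by (auto intro!: derivative_eq_intros simp: field_simps)

lemma dlog_minus_w: "0 < 1 + \<gamma> * a / real w \<Longrightarrow> ((\<lambda>e. log 2 (1 + \<gamma> * (a - e) / real w)) has_real_derivative - (\<gamma> / real w) / (ln 2 * (1 + \<gamma> * a / real w))) (at 0)"
  using wpos by (auto intro!: derivative_eq_intros simp: field_simps)

lemma Phi_deriv:
  assumes x: "admissible B x"
  shows "(Phi x j has_real_derivative Dphi x j) (at 0)"
proof -
  have a: "0 < 1 + \<gamma> * x j" "0 < 1 + \<gamma> * x (Suc j)"
    using adm_facts(1)[OF x] g0 by (auto intro: add_pos_nonneg)
  have r: "0 < 1 + \<gamma> * Rs x j / real w"
    using adm_facts(3)[OF x, of j] g0 wpos by (auto intro: add_pos_nonneg)
  define c1 where "c1 = p * (1 - p) ^ (j + w) / 2"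
  define c2 where "c2 = p * (1 - p) ^ (Suc j + w) / 2"
  define c3 where "c3 = p^2 * (1 - p) ^ (j + w) * (real w / 2)"
  define d1 where "d1 = \<gamma> / (ln 2 * (1 + \<gamma> * x j))"
  define d2 where "d2 = - \<gamma> / (ln 2 * (1 + \<gamma> * x (Suc j)))"
  define d3 where "d3 = - (\<gamma> / real w) / (ln 2 * (1 + \<gamma> * Rs x j / real w))"
  have P: "Phi x j = (\<lambda>e. c1 * (log 2 (1 + \<gamma> * (x j + e)) - log 2 (1 + \<gamma> * x j))
    + c2 * (log 2 (1 + \<gamma> * (x (Suc j) - e)) - log 2 (1 + \<gamma> * x (Suc j)))
    + c3 * (log 2 (1 + \<gamma> * (Rs x j - e) / real w) - log 2 (1 + \<gamma> * Rs x j / real w)))"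
    by (simp add: Phi_def[abs_def] c1_def c2_def c3_def)
  have "(Phi x j has_real_derivative c1 * (d1 - 0) + c2 * (d2 - 0) + c3 * (d3 - 0)) (at 0)"
    unfolding P d1_def d2_def d3_def
    by (intro DERIV_add DERIV_cmult DERIV_diff DERIV_const dlog_plus dlog_minus dlog_minus_w a r)
  moreover have "c1 * d1 = cc * (1 - p) ^ j * aa x j"
    unfolding c1_def d1_def cc_def aa_def using a by (simp add: power_add field_simps)
  moreover have "c2 * d2 = - (cc * (1 - p) ^ j * ((1 - p) * aa x (Suc j)))"
    unfolding c2_def d2_def cc_def aa_def using a by (simp add: power_add field_simps)
  moreover have "c3 * d3 = - (cc * (1 - p) ^ j * (p * gg x j))"
    unfolding c3_def d3_def cc_def gg_def using r wpos by (simp add: power_add power2_eq_square field_simps)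
  ultimately show ?thesis by (simp add: Dphi_def algebra_simps)
qed

definition ismax :: "(nat \<Rightarrow> real) \<Rightarrow> bool" where
  "ismax x \<longleftrightarrow> admissible B x \<and> (\<forall>y. admissible B y \<longrightarrow> T y \<le> T x)"

lemma max_Phi:
  assumes m: "ismax x" and a: "0 \<le> x j + e" and b: "0 \<le> x (Suc j) - e"
  shows "Phi x j e \<le> 0"
proof -
  have x: "admissible B x" using m by (simp add: ismax_def)
  have "T (xp j e x) \<le> T x" using m adm_xp[OF x a b] by (simp add: ismax_def)
  then show ?thesis using T_xp[OF x a b] by simp
qed

lemma recur_of_max:
  assumes m: "ismax x" and pj: "0 < x j" and pj1: "0 < x (Suc j)"
  shows "(1 - p) * aa x (Suc j) = aa x j - p * gg x j"
proof -
  have x: "admissible B x" using m by (simp add: ismax_def)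
  have "Dphi x j = 0"
  proof (rule DERIV_local_max[OF Phi_deriv[OF x]])
    show "0 < min (x j) (x (Suc j))" using pj pj1 by simp
    show "\<forall>y. \<bar>0 - y\<bar> < min (x j) (x (Suc j)) \<longrightarrow> Phi x j y \<le> Phi x j 0"
      using max_Phi[OF m] by (auto simp: Phi0)
  qed
  then have "aa x j - (1 - p) * aa x (Suc j) - p * gg x j = 0"
    using cc_pos p0 p1 by (simp add: Dphi_def)
  then show ?thesis by simp
qed

lemma caseA:
  assumes m: "ismax x" and z: "x j = 0" and pj1: "0 < x (Suc j)"
  shows False
proof -
  have x: "admissible B x" using m by (simp add: ismax_def)
  have aj: "aa x j = 1" using z by (simp add: aa_def)
  have a1: "aa x (Suc j) < 1"
  proof -
    have "0 < \<gamma> * x (Suc j)" using pj1 g0 by simp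
    then show ?thesis by (simp add: aa_def divide_less_eq_1)
  qed
  have g: "gg x j \<le> 1" using gg_bounds[OF x] by simp
  have "(1 - p) * aa x (Suc j) < 1 - p" using a1 p1 by simp
  moreover have "p * gg x j \<le> p" using g p0 by (simp add: mult_le_cancel_left1)
  ultimately have "0 < aa x j - (1 - p) * aa x (Suc j) - p * gg x j" using aj by linarith
  then have D: "0 < Dphi x j" using cc_pos p0 p1 by (simp add: Dphi_def)
  obtain d where d: "d > 0" "\<forall>h>0. h < d \<longrightarrow> Phi x j 0 < Phi x j (0 + h)"
    using DERIV_pos_inc_right[OF Phi_deriv[OF x] D] by blast
  define h where "h = min (d / 2) (x (Suc j))"
  have h: "0 < h" "h < d" "h \<le> x (Suc j)" using d pj1 by (auto simp: h_def)
  have "0 < Phi x j h" using d(2) h by (simp add: Phi0)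
  moreover have "Phi x j h \<le> 0" using max_Phi[OF m] z h by simp
  ultimately show False by simp
qed

lemma caseB:
  assumes m: "ismax x" and pj: "0 < x j" and z: "x (Suc j) = 0" and R: "Rs x j = 0"
  shows False
proof -
  have x: "admissible B x" using m by (simp add: ismax_def)
  have a1: "aa x (Suc j) = 1" using z by (simp add: aa_def)
  have aj: "aa x j < 1"
  proof -
    have "0 < \<gamma> * x j" using pj g0 by simp
    then show ?thesis by (simp add: aa_def divide_less_eq_1)
  qed
  have g: "gg x j = 1" using R by (simp add: gg_def)
  have "aa x j - (1 - p) * aa x (Suc j) - p * gg x j < 0" using aj a1 g by simp
  then have D: "Dphi x j < 0" using cc_pos p0 p1 by (simp add: Dphi_def mult_pos_neg)
  obtain d where d: "d > 0" "\<forall>h>0. h < d \<longrightarrow> Phi x j 0 < Phi x j (0 - h)"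
    using DERIV_neg_dec_left[OF Phi_deriv[OF x] D] by blast
  define h where "h = min (d / 2) (x j)"
  have h: "0 < h" "h < d" "h \<le> x j" using d pj by (auto simp: h_def)
  have "0 < Phi x j (- h)" using d(2) h by (simp add: Phi0)
  moreover have "Phi x j (- h) \<le> 0" using max_Phi[OF m] z h by simp
  ultimately show False by simp
qed

end

context params begin

lemma geo_tail: "(\<Sum>k. if m \<le> k then K * (1 - p) ^ k else 0) = K * (1 - p) ^ m / p"
proof -
  let ?f = "\<lambda>k. if m \<le> k then K * (1 - p) ^ k else 0"
  have s: "summable ?f"
    by (rule summable_geo_bound[of _ "\<bar>K\<bar>"]) (auto simp: abs_mult p1 less_imp_le)
  have "suminf ?f = (\<Sum>n. ?f (n + m)) + (\<Sum>i<m. ?f i)" by (rule suminf_split_initial_segment[OF s])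
  also have "(\<Sum>i<m. ?f i) = 0" by simp
  also have "(\<Sum>n. ?f (n + m)) = (\<Sum>n. K * (1 - p) ^ (n + m))" by simp
  also have "\<dots> = K * (\<Sum>n. (1 - p) ^ (n + m))" by (rule suminf_mult[OF summable_geo_shift])
  also have "\<dots> = K * (1 - p) ^ m / p" by (simp add: geo_sum)
  finally show ?thesis by simp
qed

lemma caseC:
  assumes mx: "ismax x" and z: "\<forall>k\<ge>m. x k = 0" and lt: "suminf x < B"
  shows False
proof -
  have x: "admissible B x" using mx by (simp add: ismax_def)
  have sx: "summable x" and nn: "\<forall>i. 0 \<le> x i" using x by (auto simp: admissible_def)
  define S where "S = B - suminf x"
  have S: "0 < S" using lt by (simp add: S_def)
  define xq where "xq e i = (if i = m then e else x i)" for e i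
  have xq_eq: "xq e = (\<lambda>i. x i + (if i = m then e else 0))" for e
    using z by (auto simp: xq_def fun_eq_iff)
  have ps: "(\<Sum>i\<le>k. x i) = suminf x" if "m \<le> k" for k
    using that z by (intro suminf_finite[symmetric]) auto
  have RsS: "Rs x k = S" if "m \<le> k" for k using ps[OF that] by (simp add: Rs_def S_def)
  have Rq: "Rs (xq e) k = Rs x k - (if m \<le> k then e else 0)" for e k
    unfolding Rs_def xq_eq by (simp add: sum.distrib)
  have adm: "admissible B (xq e)" if e: "0 \<le> e" "e \<le> S" for e
  proof -
    have "(\<lambda>i. if i = m then e else 0) sums (\<Sum>i\<in>{m}. if i = m then e else (0::real))"
      by (rule sums_finite) auto
    then have "(\<lambda>i. if i = m then e else 0) sums e" by simp
    then have "(\<lambda>i. x i + (if i = m then e else 0)) sums (suminf x + e)"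
      by (intro sums_add summable_sums[OF sx])
    then have "summable (xq e) \<and> suminf (xq e) = suminf x + e" unfolding xq_eq by (simp add: sums_iff)
    moreover have "\<forall>i. 0 \<le> xq e i" using nn e by (auto simp: xq_def)
    ultimately show ?thesis using e by (simp add: admissible_def S_def)
  qed
  define k0 where "k0 = p * (1 - p) ^ (m + w) / 2"
  have k0: "0 < k0" using p0 p1 by (simp add: k0_def)
  define Psi where "Psi e = k0 * (log 2 (1 + \<gamma> * (0 + e)) - log 2 (1 + \<gamma> * 0))
     + (k0 * real w) * (log 2 (1 + \<gamma> * (S - e) / real w) - log 2 (1 + \<gamma> * S / real w))" for e
  have TPsi: "T (xq e) - T x = Psi e" if e: "0 \<le> e" "e \<le> S" for e
  proof -
    have xe: "admissible B (xq e)" by (rule adm[OF e])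
    have 2: "(\<Sum>n. F2 (xq e) n - F2 x n) = (\<Sum>n\<in>{m}. F2 (xq e) n - F2 x n)"
      by (rule suminf_finite) (auto simp: F2_def xq_def)
    have 3: "(\<Sum>n. F3 (xq e) n - F3 x n) = (\<Sum>n. if m \<le> n then
         (p^2 * (1 - p) ^ w * (real w / 2) * (log 2 (1 + \<gamma> * (S - e) / real w) - log 2 (1 + \<gamma> * S / real w))) * (1 - p) ^ n else 0)"
    proof (rule suminf_cong)
      fix n
      show "F3 (xq e) n - F3 x n = (if m \<le> n then
         (p^2 * (1 - p) ^ w * (real w / 2) * (log 2 (1 + \<gamma> * (S - e) / real w) - log 2 (1 + \<gamma> * S / real w))) * (1 - p) ^ n else 0)"
        using RsS[of n] by (simp add: F3_def Rq power_add algebra_simps)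
    qed
    have "T (xq e) - T x = (F2 (xq e) m - F2 x m) + p^2 * (1 - p) ^ w * (real w / 2) * (log 2 (1 + \<gamma> * (S - e) / real w) - log 2 (1 + \<gamma> * S / real w)) * (1 - p) ^ m / p"
      unfolding T_diff[OF x xe] 2 3 geo_tail by simp
    also have "\<dots> = Psi e"
      using z p0 by (simp add: F2_def xq_def Psi_def k0_def power_add power2_eq_square field_simps)
    finally show ?thesis .
  qed
  have r: "0 < 1 + \<gamma> * S / real w" using S g0 wpos by (auto intro: add_pos_nonneg)
  have "(Psi has_real_derivative k0 * (\<gamma> / (ln 2 * (1 + \<gamma> * 0)) - 0)
      + (k0 * real w) * (- (\<gamma> / real w) / (ln 2 * (1 + \<gamma> * S / real w)) - 0)) (at 0)"
    unfolding Psi_def[abs_def]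
    by (intro DERIV_add DERIV_cmult DERIV_diff DERIV_const dlog_plus dlog_minus_w r) simp
  moreover have pos: "0 < k0 * (\<gamma> / (ln 2 * (1 + \<gamma> * 0)) - 0)
      + (k0 * real w) * (- (\<gamma> / real w) / (ln 2 * (1 + \<gamma> * S / real w)) - 0)"
  proof -
    have q: "1 < 1 + \<gamma> * S / real w" using S g0 wpos by simp
    have "\<gamma> / (ln 2 * (1 + \<gamma> * S / real w)) < \<gamma> / ln 2"
      using q g0 by (simp add: divide_strict_left_mono mult_strict_left_mono)
    then have "0 < k0 * (\<gamma> / ln 2 - \<gamma> / (ln 2 * (1 + \<gamma> * S / real w)))" using k0 by simp
    moreover have "(k0 * real w) * (- (\<gamma> / real w) / (ln 2 * (1 + \<gamma> * S / real w)) - 0)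
        = - (k0 * (\<gamma> / (ln 2 * (1 + \<gamma> * S / real w))))" using wpos by (simp add: field_simps)
    moreover have "k0 * (\<gamma> / (ln 2 * (1 + \<gamma> * 0)) - 0) = k0 * (\<gamma> / ln 2)" by simp
    ultimately show ?thesis by (simp add: right_diff_distrib)
  qed
  ultimately obtain d where d: "d > 0" "\<forall>h>0. h < d \<longrightarrow> Psi 0 < Psi (0 + h)"
    using DERIV_pos_inc_right by blast
  define h where "h = min (d / 2) S"
  have h: "0 < h" "h < d" "h \<le> S" using d S by (auto simp: h_def)
  have "Psi 0 = 0" by (simp add: Psi_def)
  then have "0 < Psi h" using d(2) h by simp
  moreover have "T (xq h) \<le> T x" using mx adm[of h] h by (simp add: ismax_def)
  ultimately show False using TPsi[of h] h by simp
qed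

lemma pos_of_max:
  assumes mx: "ismax x"
  shows "0 < x j"
proof (rule ccontr)
  assume "\<not> 0 < x j"
  have x: "admissible B x" using mx by (simp add: ismax_def)
  have nn: "\<forall>i. 0 \<le> x i" and sx: "summable x" and le: "suminf x \<le> B" using x by (auto simp: admissible_def)
  have zj: "x j = 0" using nn \<open>\<not> 0 < x j\<close> by (meson linorder_not_le order_antisym)
  show False
  proof (cases "\<exists>l>j. 0 < x l")
    case True
    define l where "l = (LEAST l. j < l \<and> 0 < x l)"
    have l: "j < l \<and> 0 < x l" unfolding l_def using True by (metis (mono_tags, lifting) LeastI)
    then obtain i where i: "l = Suc i" "j \<le> i" by (cases l) auto
    have "x i = 0"
    proof (cases "i = j")
      case True then show ?thesis using zj by simp
    next
      case False
      then have "j < i" using i by simp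
      moreover have "i < l" using i by simp
      ultimately have "\<not> 0 < x i" unfolding l_def using not_less_Least by blast
      then show ?thesis using nn by (meson linorder_not_le order_antisym)
    qed
    then show False using caseA[OF mx] l i by simp
  next
    case False
    then have zt: "\<forall>k\<ge>j. x k = 0" using zj nn by (metis le_eq_less_or_eq linorder_not_le order_antisym)
    show False
    proof (cases "suminf x < B")
      case True then show False using caseC[OF mx zt] by simp
    next
      case False
      then have sB: "suminf x = B" using le by simp
      have ex: "\<exists>i. 0 < x i"
      proof (rule ccontr)
        assume "\<not> (\<exists>i. 0 < x i)"
        then have "\<forall>i. x i = 0" using nn by (meson linorder_not_le order_antisym)
        then have "x = (\<lambda>i. 0)" by auto
        then have "suminf x = 0" by simp
        then show False using sB Bpos by simp
      qed
      define P where "P = {i. 0 < x i}"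
      have Pfin: "finite P"
      proof -
        have "P \<subseteq> {..<j}"
        proof
          fix a assume "a \<in> P"
          then have "0 < x a" by (simp add: P_def)
          then have "\<not> j \<le> a" using zt by auto
          then show "a \<in> {..<j}" by simp
        qed
        then show ?thesis by (rule finite_subset) simp
      qed
      have Pne: "P \<noteq> {}" using ex by (auto simp: P_def)
      define i where "i = Max P"
      have iP: "0 < x i" using Max_in[OF Pfin Pne] by (simp add: i_def P_def)
      have above: "x k = 0" if "i < k" for k
      proof -
        have "k \<notin> P"
        proof
          assume "k \<in> P"
          then have "k \<le> i" unfolding i_def by (rule Max_ge[OF Pfin])
          then show False using that by simp
        qed
        then show ?thesis using nn by (auto simp: P_def) (meson linorder_not_le order_antisym)
      qed
      have "(\<Sum>k\<le>i. x k) = suminf x"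
        using above by (intro suminf_finite[symmetric]) auto
      then have "Rs x i = 0" using sB by (simp add: Rs_def)
      then show False using caseB[OF mx iP above[of "Suc i"]] by simp
    qed
  qed
qed

end

context params begin

lemma recur_of_ismax: "ismax x \<Longrightarrow> recur x"
proof -
  assume mx: "ismax x"
  show ?thesis unfolding recur_def
  proof
    fix j
    have "(1 - p) * aa x (Suc j) = aa x j - p * gg x j"
      by (rule recur_of_max[OF mx pos_of_max[OF mx] pos_of_max[OF mx]])
    then show "(1 - p) / (1 + \<gamma> * x (Suc j)) = 1 / (1 + \<gamma> * x j) - p / (1 + (\<gamma> / real w) * (B - (\<Sum>i\<le>j. x i)))"
      unfolding gg_eq by (simp add: aa_def)
  qed
qed

lemma sumB_of_recur:
  assumes x: "admissible B x" and r: "recur x"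
  shows "suminf x = B"
proof (rule ccontr)
  assume "suminf x \<noteq> B"
  then have lt: "suminf x < B" using x by (simp add: admissible_def)
  define S where "S = B - suminf x"
  have S: "0 < S" using lt by (simp add: S_def)
  define G where "G = 1 / (1 + \<gamma> * S / real w)"
  have q: "0 < 1 + \<gamma> * S / real w" using S g0 wpos by (auto intro: add_pos_nonneg)
  have gle: "gg x k \<le> G" for k
  proof -
    have "S \<le> Rs x k" using adm_facts(5)[OF x, of k] by (simp add: S_def Rs_def)
    then have "\<gamma> * S / real w \<le> \<gamma> * Rs x k / real w" using g0 wpos by (simp add: divide_right_mono)
    then show ?thesis unfolding gg_def G_def using q by (intro divide_left_mono) auto
  qed
  have xs: "S / real w \<le> x m" for m
  proof -
    have D: "(1 - p) ^ m * aa x m = p * tl x m" using DD_zero[OF x r, of m] by (simp add: DD_def)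
    have "tl x m \<le> (\<Sum>k. G * (1 - p) ^ (k + m))"
      unfolding tl_def
    proof (rule suminf_le)
      fix k show "hh x (k + m) \<le> G * (1 - p) ^ (k + m)"
        using gle[of "k + m"] p1 by (simp add: hh_def mult.commute mult_right_mono)
    qed (use summable_hh_shift[OF x] summable_geo_shift in \<open>auto intro: summable_mult\<close>)
    also have "\<dots> = G * ((1 - p) ^ m / p)" by (simp add: suminf_mult[OF summable_geo_shift] geo_sum)
    finally have "(1 - p) ^ m * aa x m \<le> (1 - p) ^ m * G" using D p0 by (simp add: field_simps)
    then have "aa x m \<le> G" using p0 p1 by simp
    then have "1 / (1 + \<gamma> * x m) \<le> 1 / (1 + \<gamma> * S / real w)" by (simp add: aa_def G_def)
    moreover have "0 < 1 + \<gamma> * x m" using adm_facts(1)[OF x, of m] g0 by (auto intro: add_pos_nonneg)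
    ultimately have "1 + \<gamma> * S / real w \<le> 1 + \<gamma> * x m" using q
      by (metis inverse_eq_divide inverse_le_iff_le)
    then have "\<gamma> * (S / real w) \<le> \<gamma> * x m" by simp
    then show ?thesis using g0 by (simp only: mult_le_cancel_left_pos)
  qed
  have "x \<longlonglongrightarrow> 0" using x by (intro summable_LIMSEQ_zero) (simp add: admissible_def)
  moreover have "0 < S / real w" using S wpos by simp
  ultimately obtain N where "\<forall>n\<ge>N. norm (x n - 0) < S / real w" using LIMSEQ_D by blast
  then have "x N < S / real w" by auto
  then show False using xs[of N] by simp
qed


lemma gg_mono: "admissible B x \<Longrightarrow> Rs x k \<le> Rs x k' \<Longrightarrow> gg x k' \<le> gg x k"
proof -
  assume x: "admissible B x" and le: "Rs x k \<le> Rs x k'"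
  have q: "0 < 1 + \<gamma> * Rs x k / real w" using adm_facts(3)[OF x, of k] g0 wpos by (auto intro: add_pos_nonneg)
  have "\<gamma> * Rs x k / real w \<le> \<gamma> * Rs x k' / real w" using le g0 wpos by (simp add: divide_right_mono)
  then show ?thesis unfolding gg_def using q by (intro divide_left_mono) auto
qed

lemma gg_strict: "admissible B x \<Longrightarrow> Rs x k < Rs x k' \<Longrightarrow> gg x k' < gg x k"
proof -
  assume x: "admissible B x" and le: "Rs x k < Rs x k'"
  have q: "0 < 1 + \<gamma> * Rs x k / real w" using adm_facts(3)[OF x, of k] g0 wpos by (auto intro: add_pos_nonneg)
  have "\<gamma> * Rs x k / real w < \<gamma> * Rs x k' / real w" using le g0 wpos by (simp add: divide_strict_right_mono)
  then show ?thesis unfolding gg_def using q by (intro divide_strict_left_mono) auto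
qed

lemma Rs_mono: "admissible B x \<Longrightarrow> k \<le> k' \<Longrightarrow> Rs x k' \<le> Rs x k"
proof -
  assume x: "admissible B x" and kk: "k \<le> k'"
  have "(\<Sum>i\<le>k. x i) \<le> (\<Sum>i\<le>k'. x i)"
    using kk adm_facts(1)[OF x] by (intro sum_mono2) auto
  then show ?thesis by (simp add: Rs_def)
qed

lemma aa_gt_gg:
  assumes mx: "ismax x"
  shows "gg x j < aa x j"
proof -
  have x: "admissible B x" using mx by (simp add: ismax_def)
  have r: "recur x" by (rule recur_of_ismax[OF mx])
  have D: "(1 - p) ^ j * aa x j = p * tl x j" using DD_zero[OF x r, of j] by (simp add: DD_def)
  have t1: "gg x (Suc j) * ((1 - p) ^ Suc j / p) \<le> tl x (Suc j)"
  proof -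
    have "(\<Sum>k. gg x (Suc j) * (1 - p) ^ (k + Suc j)) \<le> tl x (Suc j)"
      unfolding tl_def
    proof (rule suminf_le)
      fix k
      have "gg x (Suc j) \<le> gg x (k + Suc j)" using gg_mono[OF x Rs_mono[OF x]] by simp
      then show "gg x (Suc j) * (1 - p) ^ (k + Suc j) \<le> hh x (k + Suc j)"
        using p1 by (simp add: hh_def mult.commute mult_left_mono)
    qed (use summable_hh_shift[OF x, of "Suc j"] summable_geo_shift[of "Suc j"] in \<open>auto intro: summable_mult\<close>)
    moreover have "(\<Sum>k. gg x (Suc j) * (1 - p) ^ (k + Suc j)) = gg x (Suc j) * ((1 - p) ^ Suc j / p)"
      by (subst suminf_mult[OF summable_geo_shift]) (simp only: geo_sum)
    ultimately show ?thesis by simp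
  qed
  have Rlt: "Rs x (Suc j) < Rs x j"
    using pos_of_max[OF mx, of "Suc j"] by (simp add: Rs_def)
  have gs: "gg x j < gg x (Suc j)" by (rule gg_strict[OF x Rlt])
  have "p * tl x j = p * hh x j + p * tl x (Suc j)" using tl_Suc[OF x, of j] by (simp add: algebra_simps)
  moreover have "p * tl x (Suc j) \<ge> p * (gg x (Suc j) * ((1 - p) ^ Suc j / p))"
    using t1 p0 by (intro mult_left_mono) auto
  moreover have "p * (gg x (Suc j) * ((1 - p) ^ Suc j / p)) = gg x (Suc j) * (1 - p) ^ Suc j" using p0 by simp
  moreover have "gg x (Suc j) * (1 - p) ^ Suc j > gg x j * (1 - p) ^ Suc j" using gs p1 by simp
  ultimately have "p * tl x j > p * hh x j + gg x j * (1 - p) ^ Suc j" by linarith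
  then have "(1 - p) ^ j * aa x j > (1 - p) ^ j * gg x j"
    unfolding D by (simp add: hh_def algebra_simps)
  then show ?thesis using p1 by simp
qed

lemma x_lt_R:
  assumes mx: "ismax x"
  shows "x j < Rs x j / real w"
proof -
  have x: "admissible B x" using mx by (simp add: ismax_def)
  have "gg x j < aa x j" by (rule aa_gt_gg[OF mx])
  moreover have a: "0 < 1 + \<gamma> * x j" using adm_facts(1)[OF x, of j] g0 by (auto intro: add_pos_nonneg)
  moreover have q: "0 < 1 + \<gamma> * Rs x j / real w" using adm_facts(3)[OF x, of j] g0 wpos by (auto intro: add_pos_nonneg)
  ultimately have "1 + \<gamma> * x j < 1 + \<gamma> * Rs x j / real w"
    unfolding gg_def aa_def by (metis inverse_eq_divide inverse_less_iff_less)
  then have "\<gamma> * x j < \<gamma> * (Rs x j / real w)" by simp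
  then show ?thesis using g0 by (simp only: mult_less_cancel_left_pos)
qed

lemma x_decr:
  assumes mx: "ismax x"
  shows "x (Suc j) < x j"
proof -
  have x: "admissible B x" using mx by (simp add: ismax_def)
  have "(1 - p) * aa x (Suc j) = aa x j - p * gg x j"
    by (rule recur_of_max[OF mx pos_of_max[OF mx] pos_of_max[OF mx]])
  moreover have "p * gg x j < p * aa x j" using aa_gt_gg[OF mx, of j] p0 by simp
  ultimately have "(1 - p) * aa x j < (1 - p) * aa x (Suc j)" by (simp add: algebra_simps)
  then have "aa x j < aa x (Suc j)" using p1 by simp
  moreover have a: "0 < 1 + \<gamma> * x j" "0 < 1 + \<gamma> * x (Suc j)"
    using adm_facts(1)[OF x] g0 by (auto intro: add_pos_nonneg)
  ultimately have "1 + \<gamma> * x (Suc j) < 1 + \<gamma> * x j"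
    unfolding aa_def by (metis inverse_eq_divide inverse_less_iff_less)
  then show ?thesis using g0 by simp
qed

lemma max_unique:
  assumes mx: "ismax x" and y: "admissible B y" and eq: "T y = T x"
  shows "y = x"
proof (rule ccontr)
  assume ne: "y \<noteq> x"
  have x: "admissible B x" using mx by (simp add: ismax_def)
  have "(T x + T y) / 2 < T (cmb (1/2) x y)" using T_strict[OF x y] ne by auto
  moreover have "T (cmb (1/2) x y) \<le> T x" using mx adm_cmb[OF x y] by (simp add: ismax_def)
  ultimately show False using eq by simp
qed

lemma recur_unique:
  assumes mx: "ismax x" and nn: "\<forall>j. 0 \<le> y j" and r: "recur y" and s: "y sums B"
  shows "y = x"
proof -
  have y: "admissible B y" using nn s by (simp add: admissible_def sums_iff)
  have D: "\<forall>m. DD y m = 0" using DD_zero[OF y r] by simp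
  have x: "admissible B x" using mx by (simp add: ismax_def)
  have "T x \<le> T y" by (rule T_max_of_DD[OF y D x])
  moreover have "T y \<le> T x" using mx y by (simp add: ismax_def)
  ultimately show ?thesis using max_unique[OF mx y] by simp
qed

end

lemma psum_strict:
  fixes y :: "nat \<Rightarrow> real" and i j :: nat
  assumes pos: "\<forall>j. 0 < y j" and "i < j"
  shows "(\<Sum>k<i. y k) < (\<Sum>k<j. y k)"
proof -
  have "(\<Sum>k<j. y k) = (\<Sum>k<i. y k) + (\<Sum>k\<in>{i..<j}. y k)"
  proof -
    have "(\<Sum>k\<in>{0..<i}. y k) + (\<Sum>k\<in>{i..<j}. y k) = (\<Sum>k\<in>{0..<j}. y k)"
      by (rule sum.atLeastLessThan_concat) (use assms in auto)
    then show ?thesis by (simp add: atLeast0LessThan)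
  qed
  moreover have "0 < (\<Sum>k\<in>{i..<j}. y k)" using assms by (intro sum_pos) auto
  ultimately show ?thesis by simp
qed

definition afun_of :: "real \<Rightarrow> (nat \<Rightarrow> real) \<Rightarrow> real \<Rightarrow> real" where
  "afun_of B y b = (if \<exists>j. b = B - (\<Sum>k<j. y k) then y (THE j. b = B - (\<Sum>k<j. y k)) else 0)"

lemma afun_of_at:
  assumes pos: "\<forall>j. 0 < y j"
  shows "afun_of B y (B - (\<Sum>k<j. y k)) = y j"
proof -
  have "(THE i. B - (\<Sum>k<j. y k) = B - (\<Sum>k<i. y k)) = j"
  proof (rule the_equality)
    fix i assume "B - (\<Sum>k<j. y k) = B - (\<Sum>k<i. y k)"
    then have e: "(\<Sum>k<j. y k) = (\<Sum>k<i. y k)" by simp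
    show "i = j"
    proof (rule ccontr)
      assume "i \<noteq> j"
      then have "i < j \<or> j < i" by auto
      then show False using psum_strict[OF pos, of i j] psum_strict[OF pos, of j i] e by auto
    qed
  qed simp
  then show ?thesis unfolding afun_of_def by auto
qed

lemma afun_of_ok:
  assumes pos: "\<forall>j. 0 < y j" and s: "summable y" and le: "suminf y \<le> B" and B: "0 < B"
  shows "afun_ok B (afun_of B y)"
proof
  show "0 < B" by (rule B)
  show "\<forall>b. 0 \<le> b \<and> b \<le> B \<longrightarrow> 0 \<le> afun_of B y b \<and> afun_of B y b \<le> b"
  proof (intro allI impI)
    fix b assume b: "0 \<le> b \<and> b \<le> B"
    show "0 \<le> afun_of B y b \<and> afun_of B y b \<le> b"
    proof (cases "\<exists>j. b = B - (\<Sum>k<j. y k)")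
      case True
      then obtain j where j: "b = B - (\<Sum>k<j. y k)" by blast
      have "(\<Sum>k<Suc j. y k) \<le> suminf y" by (rule sum_le_suminf[OF s]) (use pos in \<open>auto intro: less_imp_le\<close>)
      then have "y j \<le> b" using le j by simp
      then show ?thesis using afun_of_at[OF pos, of B j] j pos by (simp add: less_imp_le)
    next
      case False then show ?thesis using b by (simp add: afun_of_def)
    qed
  qed
qed

lemma ind_batt_of: "\<forall>j. 0 < y j \<Longrightarrow> ind_batt B (afun_of B y) j = B - (\<Sum>k<j. y k)"
  by (induction j) (simp_all add: afun_of_at)

lemma induced_of: "\<forall>j. 0 < y j \<Longrightarrow> induced_seq B (afun_of B y) = y"
  by (simp add: fun_eq_iff induced_seq_def ind_batt_of afun_of_at)

theorem theorem1:
  fixes p \<gamma> B :: real and w :: nat and Afun :: "real \<Rightarrow> real"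
  assumes "0 < p" and "p < 1" and "\<gamma> > 0" and "B > 0" and "w \<ge> 1"
    and "\<forall>b. 0 \<le> b \<and> b \<le> B \<longrightarrow> 0 \<le> Afun b \<and> Afun b \<le> b"
    and "feasible_policy B w (stat_policy B w Afun)"
    and "liminf (\<lambda>T. ereal (avg_throughput p \<gamma> w (stat_policy B w Afun) T)) = opt_value p \<gamma> B w"
  shows "(opt_value p \<gamma> B w = (SUP x\<in>{x. admissible B x}. ereal (T_inf p \<gamma> B w x)))
    \<and> (admissible B (induced_seq B Afun)
         \<and> (\<forall>x. admissible B x \<longrightarrow> T_inf p \<gamma> B w x \<le> T_inf p \<gamma> B w (induced_seq B Afun))
         \<and> (\<forall>x. admissible B x \<and> T_inf p \<gamma> B w x = T_inf p \<gamma> B w (induced_seq B Afun)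
               \<longrightarrow> x = induced_seq B Afun))
    \<and> ((\<forall>j. (1 - p) / (1 + \<gamma> * induced_seq B Afun (Suc j))
               = 1 / (1 + \<gamma> * induced_seq B Afun j)
                 - p / (1 + (\<gamma> / real w) * (B - (\<Sum>i\<le>j. induced_seq B Afun i))))
         \<and> induced_seq B Afun sums B
         \<and> (\<forall>x. (\<forall>j. 0 \<le> x j) \<and>
               (\<forall>j. (1 - p) / (1 + \<gamma> * x (Suc j))
                    = 1 / (1 + \<gamma> * x j) - p / (1 + (\<gamma> / real w) * (B - (\<Sum>i\<le>j. x i))))
               \<and> x sums B \<longrightarrow> x = induced_seq B Afun))
    \<and> (\<forall>j. 0 < induced_seq B Afun j
           \<and> induced_seq B Afun (Suc j) < induced_seq B Afun j
           \<and> induced_seq B Afun j < (B - (\<Sum>i\<le>j. induced_seq B Afun i)) / real w)"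
proof -
  note A = assms
  interpret params p \<gamma> B w using A by unfold_locales auto
  interpret M: model B Afun w p \<gamma> using A by unfold_locales auto
  define xi where "xi = induced_seq B Afun"
  have xi_nn: "\<forall>j. 0 \<le> xi j" using M.xi_bounds by (simp add: xi_def)
  have xi_ps: "(\<Sum>i\<le>k. xi i) \<le> B" for k
    using M.ind_batt_sum[of k] M.ind_batt_bounds[of "Suc k"] by (simp add: xi_def)
  have xi_s: "summable xi"
  proof (rule summableI_nonneg_bounded[of xi B])
    show "0 \<le> xi n" for n using xi_nn by simp
    show "(\<Sum>i<n. xi i) \<le> B" for n
    proof -
      have "(\<Sum>i<n. xi i) \<le> (\<Sum>i<Suc n. xi i)" using xi_nn by (intro sum_mono2) auto
      then show ?thesis using xi_ps[of n] by (simp add: lessThan_Suc_atMost)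
    qed
  qed
  have xi_adm: "admissible B xi"
  proof -
    have "suminf xi \<le> B"
    proof (rule suminf_le_const[OF xi_s])
      fix n
      have "(\<Sum>i<n. xi i) \<le> (\<Sum>i<Suc n. xi i)" using xi_nn by (intro sum_mono2) auto
      then show "(\<Sum>i<n. xi i) \<le> B" using xi_ps[of n] by (simp add: lessThan_Suc_atMost)
    qed
    then show ?thesis using xi_nn xi_s by (simp add: admissible_def)
  qed
  have liminf_eq: "liminf (\<lambda>T. ereal (avg_throughput p \<gamma> w (stat_policy B w Af) T)) = ereal (T (induced_seq B Af))"
    if "model B Af w p \<gamma>" for Af
  proof -
    interpret N: model B Af w p \<gamma> by (rule that)
    show ?thesis by (intro lim_imp_Liminf tendsto_ereal N.avg_lim_T) simp
  qed
  have opt: "opt_value p \<gamma> B w = ereal (T xi)"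
    using A(8) liminf_eq[OF M.model_axioms] by (simp add: xi_def)
  have dom_pos: "T y \<le> T xi" if y: "admissible B y" and pos: "\<forall>j. 0 < y j" for y
  proof -
    have s: "summable y" "suminf y \<le> B" using y by (auto simp: admissible_def)
    have ok: "afun_ok B (afun_of B y)" by (rule afun_of_ok[OF pos s]) (use A in auto)
    have mod: "model B (afun_of B y) w p \<gamma>"
      using ok A unfolding model_def sysw_def model_axioms_def sysw_axioms_def by auto
    interpret N: model B "afun_of B y" w p \<gamma> by (rule mod)
    have "stat_policy B w (afun_of B y) \<in> {pol. feasible_policy B w pol}" using N.feasible by simp
    then have "liminf (\<lambda>T. ereal (avg_throughput p \<gamma> w (stat_policy B w (afun_of B y)) T)) \<le> opt_value p \<gamma> B w"
      unfolding opt_value_def by (rule SUP_upper)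
    then have "ereal (T y) \<le> ereal (T xi)" using liminf_eq[OF mod] induced_of[OF pos] opt by simp
    then show ?thesis by simp
  qed
  define y0 where "y0 j = B * (1/2) ^ Suc j" for j
  have y0_pos: "\<forall>j. 0 < y0 j" using A by (simp add: y0_def)
  have y0_sums: "y0 sums B"
  proof -
    have "(\<lambda>j. (1/2::real) ^ Suc j) sums 1"
      using power_half_series by simp
    then have "(\<lambda>j. B * (1/2::real) ^ Suc j) sums (B * 1)" by (rule sums_mult)
    then show ?thesis by (simp add: y0_def[abs_def])
  qed
  have y0_adm: "admissible B y0" using y0_pos y0_sums by (auto simp: admissible_def sums_iff less_imp_le)
  have dom: "T x \<le> T xi" if x: "admissible B x" for x
  proof (rule ccontr)
    assume "\<not> T x \<le> T xi"
    then have d: "0 < T x - T xi" by simp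
    define Mm where "Mm = \<bar>T x - T y0\<bar> + 1"
    have Mm: "1 \<le> Mm" by (simp add: Mm_def)
    define t where "t = min 1 ((T x - T xi) / (2 * Mm))"
    have t: "0 < t" "t \<le> 1" using d Mm by (auto simp: t_def)
    have tM: "t * Mm \<le> (T x - T xi) / 2"
    proof -
      have "t \<le> (T x - T xi) / (2 * Mm)" by (simp add: t_def)
      then have "t * Mm \<le> (T x - T xi) / (2 * Mm) * Mm" using Mm by (intro mult_right_mono) auto
      then show ?thesis using Mm by simp
    qed
    have zpos: "\<forall>j. 0 < cmb t x y0 j"
    proof
      fix j
      have "0 \<le> (1 - t) * x j" using t adm_facts(1)[OF x, of j] by simp
      moreover have "0 < t * y0 j" using t y0_pos by simp
      ultimately show "0 < cmb t x y0 j" by (simp add: cmb_def)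
    qed
    have "(1 - t) * T x + t * T y0 \<le> T (cmb t x y0)" by (rule T_concave[OF x y0_adm]) (use t in auto)
    also have "\<dots> \<le> T xi" by (rule dom_pos[OF adm_cmb[OF x y0_adm] zpos]) (use t in auto)
    finally have "T x - T xi \<le> t * (T x - T y0)" by (simp add: algebra_simps)
    also have "\<dots> \<le> t * Mm" using t by (intro mult_left_mono) (auto simp: Mm_def)
    finally show False using tM d by simp
  qed
  have mx: "ismax xi" using xi_adm dom by (simp add: ismax_def)
  have i: "opt_value p \<gamma> B w = (SUP x\<in>{x. admissible B x}. ereal (T x))"
  proof -
    have "(SUP x\<in>{x. admissible B x}. ereal (T x)) = ereal (T xi)"
    proof (rule antisym)
      show "(SUP x\<in>{x. admissible B x}. ereal (T x)) \<le> ereal (T xi)"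
        using dom by (intro SUP_least) simp
      show "ereal (T xi) \<le> (SUP x\<in>{x. admissible B x}. ereal (T x))"
        using xi_adm by (intro SUP_upper) simp
    qed
    then show ?thesis using opt by simp
  qed
  have ii: "admissible B xi \<and> (\<forall>x. admissible B x \<longrightarrow> T x \<le> T xi)
      \<and> (\<forall>x. admissible B x \<and> T x = T xi \<longrightarrow> x = xi)"
    using xi_adm dom max_unique[OF mx] by auto
  have rec: "recur xi" by (rule recur_of_ismax[OF mx])
  have iii: "xi sums B" using sumB_of_recur[OF xi_adm rec] xi_s by (simp add: sums_iff)
  have iii2: "\<forall>x. (\<forall>j. 0 \<le> x j) \<and> recur x \<and> x sums B \<longrightarrow> x = xi"
    using recur_unique[OF mx] by blast
  have iv: "\<forall>j. 0 < xi j \<and> xi (Suc j) < xi j \<and> xi j < (B - (\<Sum>i\<le>j. xi i)) / real w"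
    using pos_of_max[OF mx] x_decr[OF mx] x_lt_R[OF mx] by (simp add: Rs_def)
  show ?thesis
    using i ii rec iii iii2 iv unfolding xi_def recur_def by blast
qed

end
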